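(* Let $(A,\Delta,\epsilon)$ be a biunital bialgebra over $k$, and let $W$ be the left ideal of $A\otimes A$ generated by $\{\epsilon(a)(1\otimes 1)-\Delta(a)\mid a\in A\}$. Then the left $A\otimes A$-module $(A\otimes A)/W$ is a preantipode for the modulation $(A,\boldsymbol{\Delta},\boldsymbol{\epsilon})$ of $A$ (where $\boldsymbol\Delta$ is $A\otimes A$ with left $A\otimes A$-action by multiplication and right $A$-action $x\cdot b=x\Delta(b)$, and $\boldsymbol\epsilon=k$ with right $A$-action $\lambda\cdot b=\lambda\epsilon(b)$). If moreover $A$ is a Hopf algebra with antipode $S$, then $(A\otimes A)/W$ is isomorphic, as an $(A,A^{op})$-bimodule, to the modulation $\mathbf{S}$ of $S$ (viewed as a homomorphism $A^{op}\to A$), namely $A$ with $a\cdot x\cdot b=a\,x\,S(b)$, via $[a\otimes b]\mapsto aS(b)$; consequently $(A,\boldsymbol\Delta,\boldsymbol\epsilon,\mathbf S)$ is a hopfish algebra.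
   Context: $k$ is a commutative ring, $\otimes=\otimes_k$, and ${}^*$ denotes the $k$-dual. A sesquiunital sesquialgebra over $k$ is a unital $k$-algebra $A$ with an $(A\otimes A,A)$-bimodule $\boldsymbol\Delta$ (coproduct) and a right $A$-module $\boldsymbol\epsilon$ (counit) such that $(A\otimes\boldsymbol\Delta)\otimes_{A\otimes A}\boldsymbol\Delta\cong(\boldsymbol\Delta\otimes A)\otimes_{A\otimes A}\boldsymbol\Delta$ as $(A\otimes A\otimes A,A)$-bimodules, and $(\boldsymbol\epsilon\otimes A)\otimes_{A\otimes A}\boldsymbol\Delta$ and $(A\otimes\boldsymbol\epsilon)\otimes_{A\otimes A}\boldsymbol\Delta$ are both isomorphic to $A$ as $(A,A)$-bimodules. The space $Z'=\mathrm{Hom}_A(\boldsymbol\epsilon,\boldsymbol\Delta)$ of right $A$-module maps is a right $A\otimes A$-module via $(g b)(u)=g(bu)$. A preantipode is a left $A\otimes A$-module $\mathbf S$ together with an isomorphism of right $A\otimes A$-modules $\mathbf S^*\cong Z'$; $\mathbf S$ is regarded as an $(A,A^{op})$-bimodule (left $A$ from the first factor, right $A^{op}$ from the second). A preantipode is an antipode, and $A$ with it is a hopfish algebra, if $\mathbf S$ is free of rank one as a left $A$-module. *)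

theory Defs
  imports Main
begin

text \<open>The n-fold tensor power of A over k is built
concretely: the free k-module on lists of length n (finitely supported functions
'a list => 'k), modulo the k-span of the multilinearity relations.  Elements of the tensor power
are the equivalence classes (cosets), i.e. sets of such functions.\<close>

definition fsupp :: "('b \<Rightarrow> 'k::zero) \<Rightarrow> 'b set" where
  "fsupp f = {x. f x \<noteq> 0}"

definition free :: "nat \<Rightarrow> ('a list \<Rightarrow> 'k::zero) set" where
  "free n = {f. finite (fsupp f) \<and> (\<forall>xs\<in>fsupp f. length xs = n)}"

definition bv :: "'a list \<Rightarrow> 'a list \<Rightarrow> 'k::zero_neq_one" where
  "bv xs = (\<lambda>ys. if ys = xs then 1 else 0)"

definition rep :: "'x set \<Rightarrow> 'x" where
  "rep X = (SOME f. f \<in> X)"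

definition fmul :: "('a::times list \<Rightarrow> 'k::comm_ring_1) \<Rightarrow> ('a list \<Rightarrow> 'k) \<Rightarrow> 'a list \<Rightarrow> 'k" where
  "fmul f g zs = (\<Sum>p\<in>fsupp f \<times> fsupp g.
      if map2 (*) (fst p) (snd p) = zs then f (fst p) * g (snd p) else 0)"

definition fcat :: "('a list \<Rightarrow> 'k::comm_ring_1) \<Rightarrow> ('a list \<Rightarrow> 'k) \<Rightarrow> 'a list \<Rightarrow> 'k" where
  "fcat f g zs = (\<Sum>p\<in>fsupp f \<times> fsupp g.
      if fst p @ snd p = zs then f (fst p) * g (snd p) else 0)"

definition flin :: "('a list \<Rightarrow> 'k::comm_ring_1) \<Rightarrow> ('a list \<Rightarrow> 'b list \<Rightarrow> 'k) \<Rightarrow> 'b list \<Rightarrow> 'k" where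
  "flin f F = (\<lambda>zs. \<Sum>xs\<in>fsupp f. f xs * F xs zs)"

locale kctx =
  fixes sc :: "'k::comm_ring_1 \<Rightarrow> 'a::ring_1 \<Rightarrow> 'a"
begin

definition kalgebra :: bool where
  "kalgebra \<longleftrightarrow>
     (\<forall>c x y. sc c (x + y) = sc c x + sc c y) \<and>
     (\<forall>c d x. sc (c + d) x = sc c x + sc d x) \<and>
     (\<forall>c d x. sc (c * d) x = sc c (sc d x)) \<and>
     (\<forall>x. sc 1 x = x) \<and>
     (\<forall>c x y. sc c (x * y) = sc c x * y) \<and>
     (\<forall>c x y. sc c (x * y) = x * sc c y)"

definition relgens :: "nat \<Rightarrow> ('a list \<Rightarrow> 'k) set" where
  "relgens n =
     {(\<lambda>zs. bv (xs @ [a + b] @ ys) zs - bv (xs @ [a] @ ys) zs - bv (xs @ [b] @ ys) zs)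
        | xs a b ys. length xs + length ys + 1 = n}
   \<union> {(\<lambda>zs. bv (xs @ [sc c a] @ ys) zs - c * bv (xs @ [a] @ ys) zs)
        | xs c a ys. length xs + length ys + 1 = n}"

definition rel :: "nat \<Rightarrow> ('a list \<Rightarrow> 'k) set" where
  "rel n = {f. \<exists>t r. finite t \<and> t \<subseteq> relgens n \<and> f = (\<lambda>zs. \<Sum>g\<in>t. r g * g zs)}"

definition cls :: "nat \<Rightarrow> ('a list \<Rightarrow> 'k) \<Rightarrow> ('a list \<Rightarrow> 'k) set" where
  "cls n f = {g \<in> free n. (\<lambda>zs. g zs - f zs) \<in> rel n}"

definition T :: "nat \<Rightarrow> ('a list \<Rightarrow> 'k) set set" where
  "T n = cls n ` free n"

definition tens :: "'a list \<Rightarrow> ('a list \<Rightarrow> 'k) set" where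
  "tens xs = cls (length xs) (bv xs)"

definition tadd :: "nat \<Rightarrow> ('a list \<Rightarrow> 'k) set \<Rightarrow> ('a list \<Rightarrow> 'k) set \<Rightarrow> ('a list \<Rightarrow> 'k) set" where
  "tadd n X Y = cls n (\<lambda>zs. rep X zs + rep Y zs)"

definition tneg :: "nat \<Rightarrow> ('a list \<Rightarrow> 'k) set \<Rightarrow> ('a list \<Rightarrow> 'k) set" where
  "tneg n X = cls n (\<lambda>zs. - rep X zs)"

definition tsc :: "nat \<Rightarrow> 'k \<Rightarrow> ('a list \<Rightarrow> 'k) set \<Rightarrow> ('a list \<Rightarrow> 'k) set" where
  "tsc n c X = cls n (\<lambda>zs. c * rep X zs)"

definition tzero :: "nat \<Rightarrow> ('a list \<Rightarrow> 'k) set" where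
  "tzero n = cls n (\<lambda>_. 0)"

definition tmul :: "nat \<Rightarrow> ('a list \<Rightarrow> 'k) set \<Rightarrow> ('a list \<Rightarrow> 'k) set \<Rightarrow> ('a list \<Rightarrow> 'k) set" where
  "tmul n X Y = cls n (fmul (rep X) (rep Y))"

definition tone :: "nat \<Rightarrow> ('a list \<Rightarrow> 'k) set" where
  "tone n = tens (replicate n 1)"

definition alin :: "('a list \<Rightarrow> 'k) \<Rightarrow> ('a list \<Rightarrow> 'a) \<Rightarrow> 'a" where
  "alin f F = (\<Sum>xs\<in>fsupp f. sc (f xs) (F xs))"

definition bialgebra :: "('a \<Rightarrow> ('a list \<Rightarrow> 'k) set) \<Rightarrow> ('a \<Rightarrow> 'k) \<Rightarrow> bool" where
  "bialgebra \<Delta> \<epsilon> \<longleftrightarrow>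
     kalgebra \<and>
     (\<forall>a. \<Delta> a \<in> T 2) \<and>
     (\<forall>a b. \<Delta> (a + b) = tadd 2 (\<Delta> a) (\<Delta> b)) \<and>
     (\<forall>c a. \<Delta> (sc c a) = tsc 2 c (\<Delta> a)) \<and>
     (\<forall>a b. \<Delta> (a * b) = tmul 2 (\<Delta> a) (\<Delta> b)) \<and>
     \<Delta> 1 = tone 2 \<and>
     (\<forall>a b. \<epsilon> (a + b) = \<epsilon> a + \<epsilon> b) \<and>
     (\<forall>c a. \<epsilon> (sc c a) = c * \<epsilon> a) \<and>
     (\<forall>a b. \<epsilon> (a * b) = \<epsilon> a * \<epsilon> b) \<and>
     \<epsilon> 1 = 1 \<and>
     \<comment> \<open>coassociativity: (Delta (x) id) Delta = (id (x) Delta) Delta\<close>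
     (\<forall>a. cls 3 (flin (rep (\<Delta> a)) (\<lambda>xs. fcat (rep (\<Delta> (xs ! 0))) (bv [xs ! 1])))
        = cls 3 (flin (rep (\<Delta> a)) (\<lambda>xs. fcat (bv [xs ! 0]) (rep (\<Delta> (xs ! 1)))))) \<and>
     \<comment> \<open>counitality: (eps (x) id) Delta = id = (id (x) eps) Delta\<close>
     (\<forall>a. alin (rep (\<Delta> a)) (\<lambda>xs. sc (\<epsilon> (xs ! 0)) (xs ! 1)) = a) \<and>
     (\<forall>a. alin (rep (\<Delta> a)) (\<lambda>xs. sc (\<epsilon> (xs ! 1)) (xs ! 0)) = a)"

definition hopf_antipode :: "('a \<Rightarrow> ('a list \<Rightarrow> 'k) set) \<Rightarrow> ('a \<Rightarrow> 'k) \<Rightarrow> ('a \<Rightarrow> 'a) \<Rightarrow> bool" where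
  "hopf_antipode \<Delta> \<epsilon> S \<longleftrightarrow>
     (\<forall>a b. S (a + b) = S a + S b) \<and>
     (\<forall>c a. S (sc c a) = sc c (S a)) \<and>
     (\<forall>a. alin (rep (\<Delta> a)) (\<lambda>xs. S (xs ! 0) * xs ! 1) = sc (\<epsilon> a) 1) \<and>
     (\<forall>a. alin (rep (\<Delta> a)) (\<lambda>xs. xs ! 0 * S (xs ! 1)) = sc (\<epsilon> a) 1)"

text \<open>A left A(x)A-module: carrier M, addition madd, action mact.  Its k-module structure is the
one induced by k -> A(x)A, c |-> c(1(x)1).\<close>
definition lmod :: "'m set \<Rightarrow> ('m \<Rightarrow> 'm \<Rightarrow> 'm) \<Rightarrow> (('a list \<Rightarrow> 'k) set \<Rightarrow> 'm \<Rightarrow> 'm) \<Rightarrow> bool" where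
  "lmod M madd mact \<longleftrightarrow>
     (\<forall>x\<in>M. \<forall>y\<in>M. madd x y \<in> M) \<and>
     (\<forall>b\<in>T 2. \<forall>x\<in>M. mact b x \<in> M) \<and>
     (\<forall>x\<in>M. \<forall>y\<in>M. \<forall>z\<in>M. madd (madd x y) z = madd x (madd y z)) \<and>
     (\<forall>x\<in>M. \<forall>y\<in>M. madd x y = madd y x) \<and>
     (\<exists>z\<in>M. (\<forall>x\<in>M. madd z x = x) \<and> (\<forall>x\<in>M. \<exists>y\<in>M. madd x y = z)) \<and>
     (\<forall>b\<in>T 2. \<forall>x\<in>M. \<forall>y\<in>M. mact b (madd x y) = madd (mact b x) (mact b y)) \<and>
     (\<forall>b\<in>T 2. \<forall>b'\<in>T 2. \<forall>x\<in>M. mact (tadd 2 b b') x = madd (mact b x) (mact b' x)) \<and>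
     (\<forall>b\<in>T 2. \<forall>b'\<in>T 2. \<forall>x\<in>M. mact (tmul 2 b b') x = mact b (mact b' x)) \<and>
     (\<forall>x\<in>M. mact (tone 2) x = x)"

definition mdual :: "'m set \<Rightarrow> ('m \<Rightarrow> 'm \<Rightarrow> 'm) \<Rightarrow> (('a list \<Rightarrow> 'k) set \<Rightarrow> 'm \<Rightarrow> 'm) \<Rightarrow> ('m \<Rightarrow> 'k) set" where
  "mdual M madd mact = {\<phi>.
     (\<forall>x\<in>M. \<forall>y\<in>M. \<phi> (madd x y) = \<phi> x + \<phi> y) \<and>
     (\<forall>c. \<forall>x\<in>M. \<phi> (mact (tsc 2 c (tone 2)) x) = c * \<phi> x) \<and>
     (\<forall>x. x \<notin> M \<longrightarrow> \<phi> x = 0)}"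

definition dual_act :: "'m set \<Rightarrow> (('a list \<Rightarrow> 'k) set \<Rightarrow> 'm \<Rightarrow> 'm) \<Rightarrow> ('m \<Rightarrow> 'k) \<Rightarrow> ('a list \<Rightarrow> 'k) set \<Rightarrow> 'm \<Rightarrow> 'k" where
  "dual_act M mact \<phi> b = (\<lambda>x. if x \<in> M then \<phi> (mact b x) else 0)"

text \<open>Z' = Hom_A(Delta, eps): right A-module maps from the modulation Delta (= A(x)A with
x.a = x Delta(a)) to the modulation eps (= k with c.a = c eps(a)), extended by 0 off A(x)A,
with right A(x)A-module structure (g b)(u) = g(b u).\<close>
definition Zp :: "('a \<Rightarrow> ('a list \<Rightarrow> 'k) set) \<Rightarrow> ('a \<Rightarrow> 'k) \<Rightarrow> (('a list \<Rightarrow> 'k) set \<Rightarrow> 'k) set" where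
  "Zp \<Delta> \<epsilon> = {g.
     (\<forall>x\<in>T 2. \<forall>y\<in>T 2. g (tadd 2 x y) = g x + g y) \<and>
     (\<forall>c. \<forall>x\<in>T 2. g (tsc 2 c x) = c * g x) \<and>
     (\<forall>x\<in>T 2. \<forall>a. g (tmul 2 x (\<Delta> a)) = g x * \<epsilon> a) \<and>
     (\<forall>x. x \<notin> T 2 \<longrightarrow> g x = 0)}"

definition Zact :: "(('a list \<Rightarrow> 'k) set \<Rightarrow> 'k) \<Rightarrow> ('a list \<Rightarrow> 'k) set \<Rightarrow> ('a list \<Rightarrow> 'k) set \<Rightarrow> 'k" where
  "Zact g b = (\<lambda>u. if u \<in> T 2 then g (tmul 2 b u) else 0)"

definition preantipode :: "('a \<Rightarrow> ('a list \<Rightarrow> 'k) set) \<Rightarrow> ('a \<Rightarrow> 'k) \<Rightarrow>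
    'm set \<Rightarrow> ('m \<Rightarrow> 'm \<Rightarrow> 'm) \<Rightarrow> (('a list \<Rightarrow> 'k) set \<Rightarrow> 'm \<Rightarrow> 'm) \<Rightarrow> bool" where
  "preantipode \<Delta> \<epsilon> M madd mact \<longleftrightarrow>
     lmod M madd mact \<and>
     (\<exists>\<Phi>. bij_betw \<Phi> (mdual M madd mact) (Zp \<Delta> \<epsilon>) \<and>
        (\<forall>\<phi>\<in>mdual M madd mact. \<forall>\<psi>\<in>mdual M madd mact.
            \<Phi> (\<lambda>x. \<phi> x + \<psi> x) = (\<lambda>u. \<Phi> \<phi> u + \<Phi> \<psi> u)) \<and>
        (\<forall>\<phi>\<in>mdual M madd mact. \<forall>b\<in>T 2.
            \<Phi> (dual_act M mact \<phi> b) = Zact (\<Phi> \<phi>) b))"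

definition free_rank_one :: "'m set \<Rightarrow> (('a list \<Rightarrow> 'k) set \<Rightarrow> 'm \<Rightarrow> 'm) \<Rightarrow> bool" where
  "free_rank_one M mact \<longleftrightarrow> (\<exists>g\<in>M. bij_betw (\<lambda>a. mact (tens [a, 1]) g) UNIV M)"

definition hopfish :: "('a \<Rightarrow> ('a list \<Rightarrow> 'k) set) \<Rightarrow> ('a \<Rightarrow> 'k) \<Rightarrow>
    'm set \<Rightarrow> ('m \<Rightarrow> 'm \<Rightarrow> 'm) \<Rightarrow> (('a list \<Rightarrow> 'k) set \<Rightarrow> 'm \<Rightarrow> 'm) \<Rightarrow> bool" where
  "hopfish \<Delta> \<epsilon> M madd mact \<longleftrightarrow> preantipode \<Delta> \<epsilon> M madd mact \<and> free_rank_one M mact"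

definition lideal :: "('a list \<Rightarrow> 'k) set set \<Rightarrow> ('a list \<Rightarrow> 'k) set set" where
  "lideal G = \<Inter>{I. I \<subseteq> T 2 \<and> G \<subseteq> I \<and> tzero 2 \<in> I \<and>
       (\<forall>x\<in>I. \<forall>y\<in>I. tadd 2 x y \<in> I) \<and> (\<forall>x\<in>I. tneg 2 x \<in> I) \<and>
       (\<forall>b\<in>T 2. \<forall>x\<in>I. tmul 2 b x \<in> I)}"

definition Wid :: "('a \<Rightarrow> ('a list \<Rightarrow> 'k) set) \<Rightarrow> ('a \<Rightarrow> 'k) \<Rightarrow> ('a list \<Rightarrow> 'k) set set" where
  "Wid \<Delta> \<epsilon> = lideal {tadd 2 (tsc 2 (\<epsilon> a) (tone 2)) (tneg 2 (\<Delta> a)) | a. True}"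

definition qcls :: "('a list \<Rightarrow> 'k) set set \<Rightarrow> ('a list \<Rightarrow> 'k) set \<Rightarrow> ('a list \<Rightarrow> 'k) set set" where
  "qcls W x = {y \<in> T 2. tadd 2 y (tneg 2 x) \<in> W}"

definition Q :: "('a list \<Rightarrow> 'k) set set \<Rightarrow> ('a list \<Rightarrow> 'k) set set set" where
  "Q W = qcls W ` T 2"

definition qadd :: "('a list \<Rightarrow> 'k) set set \<Rightarrow> ('a list \<Rightarrow> 'k) set set \<Rightarrow> ('a list \<Rightarrow> 'k) set set \<Rightarrow> ('a list \<Rightarrow> 'k) set set" where
  "qadd W p q = qcls W (tadd 2 (rep p) (rep q))"

definition qact :: "('a list \<Rightarrow> 'k) set set \<Rightarrow> ('a list \<Rightarrow> 'k) set \<Rightarrow> ('a list \<Rightarrow> 'k) set set \<Rightarrow> ('a list \<Rightarrow> 'k) set set" where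
  "qact W b q = qcls W (tmul 2 b (rep q))"

definition smod_act :: "('a \<Rightarrow> 'a) \<Rightarrow> ('a list \<Rightarrow> 'k) set \<Rightarrow> 'a \<Rightarrow> 'a" where
  "smod_act S b x = alin (rep b) (\<lambda>xs. xs ! 0 * x * S (xs ! 1))"

end

end

theory Submission
  imports Defs "HOL-Library.Function_Algebras"
begin

lemma fsupp_iff: "x \<in> fsupp f \<longleftrightarrow> f x \<noteq> 0" by (simp add: fsupp_def)

lemma bv_apply: "bv xs ys = (if ys = xs then 1 else 0)" by (simp add: bv_def)

lemma fsupp_bv[simp]: "fsupp (bv xs :: _ \<Rightarrow> 'k::zero_neq_one) = {xs}"
  by (auto simp: fsupp_def bv_def)

lemma free_bv[simp]: "(bv xs :: _ \<Rightarrow> 'k::zero_neq_one) \<in> free n \<longleftrightarrow> length xs = n"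
  by (auto simp: free_def)

lemma freeD: "f \<in> free n \<Longrightarrow> finite (fsupp f)" "f \<in> free n \<Longrightarrow> xs \<in> fsupp f \<Longrightarrow> length xs = n"
  by (auto simp: free_def)

lemma free_add: "f \<in> free n \<Longrightarrow> g \<in> free n \<Longrightarrow> (\<lambda>z. f z + (g z::'k::comm_ring_1)) \<in> free n"
proof -
  assume a: "f \<in> free n" "g \<in> free n"
  have "fsupp (\<lambda>z. f z + g z) \<subseteq> fsupp f \<union> fsupp g" by (auto simp: fsupp_def)
  with a show ?thesis unfolding free_def by (auto intro: finite_subset)
qed

lemma free_smul: "f \<in> free n \<Longrightarrow> (\<lambda>z. (c::'k::comm_ring_1) * f z) \<in> free n"
proof -
  assume a: "f \<in> free n"
  have "fsupp (\<lambda>z. c * f z) \<subseteq> fsupp f" by (auto simp: fsupp_def)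
  with a show ?thesis unfolding free_def by (auto intro: finite_subset)
qed

lemma free_neg: "f \<in> free n \<Longrightarrow> (\<lambda>z. - (f z::'k::comm_ring_1)) \<in> free n"
  using free_smul[of f n "-1"] by simp

lemma free_diff: "f \<in> free n \<Longrightarrow> g \<in> free n \<Longrightarrow> (\<lambda>z. f z - (g z::'k::comm_ring_1)) \<in> free n"
  using free_add[of f n "\<lambda>z. - g z"] free_neg[of g n] by simp

lemma free_zero[simp]: "(\<lambda>z. 0) \<in> free n" by (simp add: free_def fsupp_def)

lemma free_sum: "finite I \<Longrightarrow> (\<And>i. i \<in> I \<Longrightarrow> g i \<in> free n) \<Longrightarrow> (\<lambda>z. \<Sum>i\<in>I. (g i z::'k::comm_ring_1)) \<in> free n"
proof (induction I rule: finite_induct)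
  case empty then show ?case by simp
next
  case (insert x F)
  then show ?case using free_add[of "g x" n "\<lambda>z. \<Sum>i\<in>F. g i z"] by simp
qed

lemma free_flin: "finite (fsupp f) \<Longrightarrow> (\<And>xs. xs \<in> fsupp f \<Longrightarrow> G xs \<in> free n) \<Longrightarrow> flin f G \<in> free n"
  unfolding flin_def
  by (rule free_sum) (auto intro: free_smul)

lemma sum_fun_apply: "(\<Sum>i\<in>I. (h i :: 'b \<Rightarrow> 'c::comm_monoid_add)) z = (\<Sum>i\<in>I. h i z)"
  by (induction I rule: infinite_finite_induct) auto

lemma flin_bv: "finite (fsupp f) \<Longrightarrow> flin f bv = f"
proof
  fix zs assume fin: "finite (fsupp f)"
  have "flin f bv zs = (\<Sum>xs\<in>fsupp f. f xs * bv xs zs)" by (simp add: flin_def)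
  also have "\<dots> = (\<Sum>xs\<in>fsupp f. if xs = zs then f xs else 0)"
    by (rule sum.cong) (auto simp: bv_def)
  also have "\<dots> = f zs" using fin by (auto simp: fsupp_def)
  finally show "flin f bv zs = f zs" .
qed

definition klin :: "('k::comm_ring_1 \<Rightarrow> 'a \<Rightarrow> 'a) \<Rightarrow> ('k \<Rightarrow> 'v \<Rightarrow> 'v) \<Rightarrow> ('a::ab_group_add \<Rightarrow> 'v::ab_group_add) \<Rightarrow> bool" where
  "klin s t h \<longleftrightarrow> (\<forall>x y. h (x + y) = h x + h y) \<and> (\<forall>c x. h (s c x) = t c (h x))"

context kctx begin

lemma relgens_rel: "g \<in> relgens n \<Longrightarrow> g \<in> rel n"
  unfolding rel_def by (rule CollectI, rule exI[of _ "{g}"], rule exI[of _ "\<lambda>_. 1"]) auto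

lemma rel_0: "(\<lambda>_. 0) \<in> rel n"
  unfolding rel_def by (rule CollectI, rule exI[of _ "{}"]) auto

lemma rel_add: assumes "f \<in> rel n" "g \<in> rel n" shows "(\<lambda>z. f z + g z) \<in> rel n"
proof -
  obtain t r where t: "finite t" "t \<subseteq> relgens n" "f = (\<lambda>zs. \<Sum>g\<in>t. r g * g zs)"
    using assms(1) unfolding rel_def by blast
  obtain t' r' where t': "finite t'" "t' \<subseteq> relgens n" "g = (\<lambda>zs. \<Sum>g\<in>t'. r' g * g zs)"
    using assms(2) unfolding rel_def by blast
  define r2 where "r2 h = (if h \<in> t then r h else 0) + (if h \<in> t' then r' h else 0)" for h
  have "(\<lambda>z. f z + g z) = (\<lambda>zs. \<Sum>h\<in>t \<union> t'. r2 h * h zs)"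
  proof
    fix zs
    have "(\<Sum>h\<in>t \<union> t'. r2 h * h zs) = (\<Sum>h\<in>t \<union> t'. (if h \<in> t then r h * h zs else 0))
       + (\<Sum>h\<in>t \<union> t'. (if h \<in> t' then r' h * h zs else 0))"
      unfolding r2_def sum.distrib[symmetric] by (rule sum.cong) (auto simp: distrib_right)
    also have "(\<Sum>h\<in>t \<union> t'. (if h \<in> t then r h * h zs else 0)) = (\<Sum>h\<in>t. r h * h zs)"
      using t t' by (simp add: sum.If_cases Int_absorb1)
    also have "(\<Sum>h\<in>t \<union> t'. (if h \<in> t' then r' h * h zs else 0)) = (\<Sum>h\<in>t'. r' h * h zs)"
      using t t' by (simp add: sum.If_cases Int_absorb1)
    finally show "f zs + g zs = (\<Sum>h\<in>t \<union> t'. r2 h * h zs)" using t t' by simp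
  qed
  then show ?thesis unfolding rel_def using t t' by blast
qed

lemma rel_smul: assumes "f \<in> rel n" shows "(\<lambda>z. c * f z) \<in> rel n"
proof -
  obtain t r where t: "finite t" "t \<subseteq> relgens n" "f = (\<lambda>zs. \<Sum>g\<in>t. r g * g zs)"
    using assms(1) unfolding rel_def by blast
  have "(\<lambda>z. c * f z) = (\<lambda>zs. \<Sum>g\<in>t. (c * r g) * g zs)"
    unfolding t(3) by (simp add: sum_distrib_left mult.assoc)
  then show ?thesis unfolding rel_def using t(1,2)
    by (intro CollectI exI[of _ t] exI[of _ "\<lambda>g. c * r g"]) simp
qed

lemma rel_neg: "f \<in> rel n \<Longrightarrow> (\<lambda>z. - f z) \<in> rel n"
  using rel_smul[of f n "-1"] by simp

lemma rel_diff: "f \<in> rel n \<Longrightarrow> g \<in> rel n \<Longrightarrow> (\<lambda>z. f z - g z) \<in> rel n"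
  using rel_add[of f n "\<lambda>z. - g z"] rel_neg[of g n] by simp

lemma rel_sum: "finite I \<Longrightarrow> (\<And>i. i \<in> I \<Longrightarrow> g i \<in> rel n) \<Longrightarrow> (\<lambda>z. \<Sum>i\<in>I. g i z) \<in> rel n"
proof (induction I rule: finite_induct)
  case empty then show ?case using rel_0 by simp
next
  case (insert x F)
  then show ?case using rel_add[of "g x" n "\<lambda>z. \<Sum>i\<in>F. g i z"] by simp
qed

lemma list_upd_split: "j < length l \<Longrightarrow> l[j := x] = take j l @ [x] @ drop (Suc j) l"
  by (simp add: upd_conv_take_nth_drop)

lemma gen_add: assumes "j < length l"
  shows "(\<lambda>z. bv (l[j := a + b]) z - bv (l[j := a]) z - bv (l[j := b]) z) \<in> rel (length l)"
proof -
  have "(\<lambda>z. bv (l[j := a + b]) z - bv (l[j := a]) z - bv (l[j := b]) z) \<in> relgens (length l)"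
    unfolding relgens_def using assms
    by (intro UnI1 CollectI exI[of _ "take j l"] exI[of _ a] exI[of _ b] exI[of _ "drop (Suc j) l"])
       (simp add: list_upd_split)
  then show ?thesis by (rule relgens_rel)
qed

lemma gen_sc: assumes "j < length l"
  shows "(\<lambda>z. bv (l[j := sc c a]) z - c * bv (l[j := a]) z) \<in> rel (length l)"
proof -
  have "(\<lambda>z. bv (l[j := sc c a]) z - c * bv (l[j := a]) z) \<in> relgens (length l)"
    unfolding relgens_def using assms
    by (intro UnI2 CollectI exI[of _ "take j l"] exI[of _ c] exI[of _ a] exI[of _ "drop (Suc j) l"])
       (simp add: list_upd_split)
  then show ?thesis by (rule relgens_rel)
qed

definition eqv :: "nat \<Rightarrow> ('a list \<Rightarrow> 'k) \<Rightarrow> ('a list \<Rightarrow> 'k) \<Rightarrow> bool" where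
  "eqv n f g \<longleftrightarrow> (\<lambda>z. f z - g z) \<in> rel n"

lemma eqv_refl[simp]: "eqv n f f" by (simp add: eqv_def rel_0)
lemma eqv_sym: "eqv n f g \<Longrightarrow> eqv n g f"
  unfolding eqv_def using rel_neg[of "\<lambda>z. f z - g z" n] by simp
lemma eqv_trans[trans]: "eqv n f g \<Longrightarrow> eqv n g h \<Longrightarrow> eqv n f h"
  unfolding eqv_def using rel_add[of "\<lambda>z. f z - g z" n "\<lambda>z. g z - h z"] by simp
lemma eqv_eq_trans[trans]: "eqv n f g \<Longrightarrow> g = h \<Longrightarrow> eqv n f h" by simp
lemma eq_eqv_trans[trans]: "f = g \<Longrightarrow> eqv n g h \<Longrightarrow> eqv n f h" by simp
lemma eqv_add: "eqv n f g \<Longrightarrow> eqv n f' g' \<Longrightarrow> eqv n (\<lambda>z. f z + f' z) (\<lambda>z. g z + g' z)"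
  unfolding eqv_def using rel_add[of "\<lambda>z. f z - g z" n "\<lambda>z. f' z - g' z"] by (simp add: algebra_simps)
lemma eqv_smul: "eqv n f g \<Longrightarrow> eqv n (\<lambda>z. c * f z) (\<lambda>z. c * g z)"
  unfolding eqv_def using rel_smul[of "\<lambda>z. f z - g z" n c] by (simp add: algebra_simps)
lemma eqv_neg: "eqv n f g \<Longrightarrow> eqv n (\<lambda>z. - f z) (\<lambda>z. - g z)"
  using eqv_smul[of n f g "-1"] by simp
lemma eqv_sum: "finite I \<Longrightarrow> (\<And>i. i \<in> I \<Longrightarrow> eqv n (f i) (g i)) \<Longrightarrow>
   eqv n (\<lambda>z. \<Sum>i\<in>I. f i z) (\<lambda>z. \<Sum>i\<in>I. g i z)"
  unfolding eqv_def using rel_sum[of I "\<lambda>i z. f i z - g i z" n] by (simp add: sum_subtractf)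
lemma eqv_rel: "eqv n f g \<longleftrightarrow> eqv n (\<lambda>z. f z - g z) (\<lambda>_. 0)"
  by (simp add: eqv_def)

lemma cls_self: "f \<in> free n \<Longrightarrow> f \<in> cls n f"
  by (simp add: cls_def rel_0)

lemma cls_eq_iff: "f \<in> free n \<Longrightarrow> g \<in> free n \<Longrightarrow> cls n f = cls n g \<longleftrightarrow> eqv n f g"
proof
  assume f: "f \<in> free n" and g: "g \<in> free n" and e: "cls n f = cls n g"
  have "f \<in> cls n g" using cls_self[OF f] e by simp
  then show "eqv n f g" by (simp add: cls_def eqv_def)
next
  assume f: "f \<in> free n" and g: "g \<in> free n" and e: "eqv n f g"
  show "cls n f = cls n g"
  proof (auto simp: cls_def)
    fix h assume "(\<lambda>z. h z - f z) \<in> rel n"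
    then have "eqv n h f" by (simp add: eqv_def)
    then have "eqv n h g" using e eqv_trans by blast
    then show "(\<lambda>z. h z - g z) \<in> rel n" by (simp add: eqv_def)
  next
    fix h assume "(\<lambda>z. h z - g z) \<in> rel n"
    then have "eqv n h g" by (simp add: eqv_def)
    then have "eqv n h f" using e eqv_trans eqv_sym by blast
    then show "(\<lambda>z. h z - f z) \<in> rel n" by (simp add: eqv_def)
  qed
qed

lemma cls_eqI: "f \<in> free n \<Longrightarrow> g \<in> free n \<Longrightarrow> eqv n f g \<Longrightarrow> cls n f = cls n g"
  using cls_eq_iff by blast

lemma rep_cls: assumes "f \<in> free n" shows "rep (cls n f) \<in> free n" "eqv n (rep (cls n f)) f"
proof -
  have "rep (cls n f) \<in> cls n f" unfolding rep_def using cls_self[OF assms] by (rule someI[where P="\<lambda>g. g \<in> cls n f"])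
  then show "rep (cls n f) \<in> free n" "eqv n (rep (cls n f)) f" by (auto simp: cls_def eqv_def)
qed

lemma T_cls: "f \<in> free n \<Longrightarrow> cls n f \<in> T n" by (simp add: T_def)

lemma T_rep: assumes "X \<in> T n" shows "rep X \<in> free n" "cls n (rep X) = X"
proof -
  obtain f where f: "f \<in> free n" "X = cls n f" using assms by (auto simp: T_def)
  then show "rep X \<in> free n" using rep_cls by auto
  show "cls n (rep X) = X" using f rep_cls cls_eqI by metis
qed

lemma T_cases: assumes "X \<in> T n" obtains f where "f \<in> free n" "X = cls n f"
  using assms by (auto simp: T_def)

lemma tens_T: "tens xs \<in> T (length xs)" by (simp add: tens_def T_cls)

lemma tadd_cls: "f \<in> free n \<Longrightarrow> g \<in> free n \<Longrightarrow> tadd n (cls n f) (cls n g) = cls n (\<lambda>z. f z + g z)"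
  unfolding tadd_def by (intro cls_eqI free_add rep_cls eqv_add)
lemma tneg_cls: "f \<in> free n \<Longrightarrow> tneg n (cls n f) = cls n (\<lambda>z. - f z)"
  unfolding tneg_def by (intro cls_eqI free_neg rep_cls eqv_neg)
lemma tsc_cls: "f \<in> free n \<Longrightarrow> tsc n c (cls n f) = cls n (\<lambda>z. c * f z)"
  unfolding tsc_def by (intro cls_eqI free_smul rep_cls eqv_smul)
lemma tzero_cls: "tzero n = cls n (\<lambda>_. 0)" by (simp add: tzero_def)

end


lemma fin_flin: "finite (fsupp f) \<Longrightarrow> (\<And>xs. xs \<in> fsupp f \<Longrightarrow> finite (fsupp (G xs))) \<Longrightarrow>
   finite (fsupp (flin f G))"
proof -
  assume a: "finite (fsupp f)" "\<And>xs. xs \<in> fsupp f \<Longrightarrow> finite (fsupp (G xs))"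
  have "fsupp (flin f G) \<subseteq> (\<Union>xs\<in>fsupp f. fsupp (G xs))"
  proof
    fix zs assume "zs \<in> fsupp (flin f G)"
    then have "(\<Sum>xs\<in>fsupp f. f xs * G xs zs) \<noteq> 0" by (simp add: fsupp_def flin_def)
    then obtain xs where "xs \<in> fsupp f" "f xs * G xs zs \<noteq> 0" by (meson sum.neutral)
    then show "zs \<in> (\<Union>xs\<in>fsupp f. fsupp (G xs))" by (auto simp: fsupp_def)
  qed
  then show ?thesis using a by (auto intro: finite_subset)
qed

lemma fin_add: "finite (fsupp f) \<Longrightarrow> finite (fsupp g) \<Longrightarrow> finite (fsupp (\<lambda>z. f z + (g z::'k::comm_ring_1)))"
  by (rule finite_subset[of _ "fsupp f \<union> fsupp g"]) (auto simp: fsupp_def)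
lemma fin_smul: "finite (fsupp f) \<Longrightarrow> finite (fsupp (\<lambda>z. c * (f z::'k::comm_ring_1)))"
  by (rule finite_subset[of _ "fsupp f"]) (auto simp: fsupp_def)
lemma fin_neg: "finite (fsupp f) \<Longrightarrow> finite (fsupp (\<lambda>z. - (f z::'k::comm_ring_1)))"
  by (rule finite_subset[of _ "fsupp f"]) (auto simp: fsupp_def)
lemma fin_diff: "finite (fsupp f) \<Longrightarrow> finite (fsupp g) \<Longrightarrow> finite (fsupp (\<lambda>z. f z - (g z::'k::comm_ring_1)))"
  by (rule finite_subset[of _ "fsupp f \<union> fsupp g"]) (auto simp: fsupp_def)
lemma fin_sum: "finite I \<Longrightarrow> (\<And>i. i \<in> I \<Longrightarrow> finite (fsupp (g i))) \<Longrightarrow> finite (fsupp (\<lambda>z. \<Sum>i\<in>I. (g i z::'k::comm_ring_1)))"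
proof (induction I rule: finite_induct)
  case empty then show ?case by (simp add: fsupp_def)
next
  case (insert x F)
  then show ?case using fin_add[of "g x" "\<lambda>z. \<Sum>i\<in>F. g i z"] by simp
qed

lemma pair_flin:
  fixes f g :: "'a list \<Rightarrow> 'k::comm_ring_1"
  shows "(\<lambda>zs. \<Sum>p\<in>fsupp f \<times> fsupp g. if P (fst p) (snd p) = zs then f (fst p) * g (snd p) else 0)
     = flin f (\<lambda>xs. flin g (\<lambda>ys. bv (P xs ys)))"
proof
  fix zs
  have "(\<Sum>p\<in>fsupp f \<times> fsupp g. if P (fst p) (snd p) = zs then f (fst p) * g (snd p) else 0)
     = (\<Sum>xs\<in>fsupp f. \<Sum>ys\<in>fsupp g. if P xs ys = zs then f xs * g ys else 0)"
    by (simp add: sum.cartesian_product split_beta)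
  also have "\<dots> = (\<Sum>xs\<in>fsupp f. f xs * (\<Sum>ys\<in>fsupp g. g ys * bv (P xs ys) zs))"
    by (simp add: sum_distrib_left bv_apply eq_commute) (intro sum.cong refl, auto)
  finally show "(\<Sum>p\<in>fsupp f \<times> fsupp g. if P (fst p) (snd p) = zs then f (fst p) * g (snd p) else 0)
     = flin f (\<lambda>xs. flin g (\<lambda>ys. bv (P xs ys))) zs" by (simp add: flin_def)
qed

lemma fmul_flin: "fmul f g = flin f (\<lambda>xs. flin g (\<lambda>ys. bv (map2 (*) xs ys)))"
  unfolding fmul_def by (rule pair_flin)

lemma fcat_flin: "fcat f g = flin f (\<lambda>xs. flin g (\<lambda>ys. bv (xs @ ys)))"
  unfolding fcat_def by (rule pair_flin)

locale lmr = kctx sc for sc :: "'k::comm_ring_1 \<Rightarrow> 'a::ring_1 \<Rightarrow> 'a" +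
  fixes smul :: "'k \<Rightarrow> 'v::ab_group_add \<Rightarrow> 'v" and R :: "'v set"
  assumes sm_add: "smul c (x + y) = smul c x + smul c y"
    and sm_ladd: "smul (c + d) x = smul c x + smul d x"
    and sm_mult: "smul (c * d) x = smul c (smul d x)"
    and sm_one[simp]: "smul 1 x = x"
    and R0: "0 \<in> R" and Radd: "x \<in> R \<Longrightarrow> y \<in> R \<Longrightarrow> x + y \<in> R"
    and Rsm: "x \<in> R \<Longrightarrow> smul c x \<in> R"
begin

lemma sm_zero_l[simp]: "smul 0 x = 0"
  using sm_ladd[of 0 0 x] by simp
lemma sm_zero_r[simp]: "smul c 0 = 0"
  using sm_add[of c 0 0] by simp
lemma sm_neg_r: "smul c (- x) = - smul c x"
proof -
  have "smul c x + smul c (- x) = 0" using sm_add[of c x "-x"] by simp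
  from add.inverse_unique[OF this] show ?thesis by simp
qed
lemma sm_neg_l: "smul (- c) x = - smul c x"
proof -
  have "smul c x + smul (- c) x = 0" using sm_ladd[of c "-c" x] by simp
  from add.inverse_unique[OF this] show ?thesis by simp
qed
lemma sm_diff_r: "smul c (x - y) = smul c x - smul c y"
  using sm_add[of c x "-y"] by (simp add: sm_neg_r)
lemma sm_comm: "smul c (smul d x) = smul d (smul c x)"
  by (metis sm_mult mult.commute)
lemma sm_sum_r: "smul c (\<Sum>i\<in>I. h i) = (\<Sum>i\<in>I. smul c (h i))"
  by (induction I rule: infinite_finite_induct) (auto simp: sm_add)
lemma sm_sum_l: "smul (\<Sum>i\<in>I. h i) x = (\<Sum>i\<in>I. smul (h i) x)"
  by (induction I rule: infinite_finite_induct) (auto simp: sm_ladd)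
lemma Rneg: "x \<in> R \<Longrightarrow> - x \<in> R"
  using Rsm[of x "-1"] by (simp add: sm_neg_l)
lemma Rdiff: "x \<in> R \<Longrightarrow> y \<in> R \<Longrightarrow> x - y \<in> R"
  using Radd[of x "-y"] Rneg[of y] by simp
lemma Rsum: "(\<And>i. i \<in> I \<Longrightarrow> h i \<in> R) \<Longrightarrow> (\<Sum>i\<in>I. h i) \<in> R"
  by (induction I rule: infinite_finite_induct) (auto simp: R0 Radd)

definition lx :: "('a list \<Rightarrow> 'k) \<Rightarrow> ('a list \<Rightarrow> 'v) \<Rightarrow> 'v" where
  "lx f F = (\<Sum>xs\<in>fsupp f. smul (f xs) (F xs))"

lemma lx_super: "finite B \<Longrightarrow> fsupp f \<subseteq> B \<Longrightarrow> lx f F = (\<Sum>xs\<in>B. smul (f xs) (F xs))"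
  unfolding lx_def by (rule sum.mono_neutral_left) (auto simp: fsupp_def)

lemma lx_add: assumes "finite (fsupp f)" "finite (fsupp g)"
  shows "lx (\<lambda>z. f z + g z) F = lx f F + lx g F"
proof -
  let ?B = "fsupp f \<union> fsupp g"
  have "lx (\<lambda>z. f z + g z) F = (\<Sum>xs\<in>?B. smul (f xs + g xs) (F xs))"
    by (rule lx_super) (use assms in \<open>auto simp: fsupp_def\<close>)
  also have "\<dots> = (\<Sum>xs\<in>?B. smul (f xs) (F xs)) + (\<Sum>xs\<in>?B. smul (g xs) (F xs))"
    by (simp add: sm_ladd sum.distrib)
  also have "\<dots> = lx f F + lx g F"
    using assms by (simp add: lx_super[of ?B f] lx_super[of ?B g])
  finally show ?thesis .
qed

lemma lx_smul: assumes "finite (fsupp f)" shows "lx (\<lambda>z. c * f z) F = smul c (lx f F)"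
proof -
  have "lx (\<lambda>z. c * f z) F = (\<Sum>xs\<in>fsupp f. smul (c * f xs) (F xs))"
    by (rule lx_super) (use assms in \<open>auto simp: fsupp_def\<close>)
  then show ?thesis by (simp add: lx_def sm_mult sm_sum_r)
qed

lemma lx_neg: "finite (fsupp f) \<Longrightarrow> lx (\<lambda>z. - f z) F = - lx f F"
  using lx_smul[of f "-1" F] by (simp add: sm_neg_l)

lemma lx_diff: "finite (fsupp f) \<Longrightarrow> finite (fsupp g) \<Longrightarrow> lx (\<lambda>z. f z - g z) F = lx f F - lx g F"
  using lx_add[of f "\<lambda>z. - g z" F] lx_neg[of g F] fin_neg[of g] by simp

lemma lx_zero[simp]: "lx (\<lambda>_. 0) F = 0"
  by (simp add: lx_def fsupp_def)

lemma lx_bv[simp]: "lx (bv l) F = F l"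
  by (simp add: lx_def bv_apply)

lemma lx_cong: "(\<And>xs. xs \<in> fsupp f \<Longrightarrow> F xs = G xs) \<Longrightarrow> lx f F = lx f G"
  unfolding lx_def by simp

lemma lx_Fadd: "lx f (\<lambda>xs. F xs + G xs) = lx f F + lx f G"
  unfolding lx_def by (simp add: sm_add sum.distrib)

lemma lx_Fsm: "lx f (\<lambda>xs. smul c (F xs)) = smul c (lx f F)"
  unfolding lx_def by (simp add: sm_comm sm_sum_r)

lemma lx_Fneg: "lx f (\<lambda>xs. - F xs) = - lx f F"
  unfolding lx_def by (simp add: sm_neg_r sum_negf)

lemma lx_Fdiff: "lx f (\<lambda>xs. F xs - G xs) = lx f F - lx f G"
  unfolding lx_def by (simp add: sm_diff_r sum_subtractf)

lemma lx_F0[simp]: "lx f (\<lambda>_. 0) = 0"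
  unfolding lx_def by simp

lemma lx_Fsum: "lx f (\<lambda>xs. \<Sum>i\<in>I. G i xs) = (\<Sum>i\<in>I. lx f (G i))"
  unfolding lx_def by (simp add: sm_sum_r sum.swap[of _ I])

lemma lx_R: "(\<And>xs. xs \<in> fsupp f \<Longrightarrow> F xs \<in> R) \<Longrightarrow> lx f F \<in> R"
  unfolding lx_def by (rule Rsum) (simp add: Rsm)

lemma lx_sumf: "finite I \<Longrightarrow> (\<And>i. i \<in> I \<Longrightarrow> finite (fsupp (g i))) \<Longrightarrow>
   lx (\<lambda>z. \<Sum>i\<in>I. g i z) F = (\<Sum>i\<in>I. lx (g i) F)"
proof (induction I rule: finite_induct)
  case empty then show ?case by simp
next
  case (insert x I)
  then have "lx (\<lambda>z. \<Sum>i\<in>insert x I. g i z) F = lx (\<lambda>z. g x z + (\<Sum>i\<in>I. g i z)) F" by simp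
  also have "\<dots> = lx (g x) F + lx (\<lambda>z. \<Sum>i\<in>I. g i z) F"
    using insert by (intro lx_add fin_sum) auto
  finally show ?case using insert by simp
qed

lemma lx_flin: assumes "finite (fsupp f)" "\<And>xs. xs \<in> fsupp f \<Longrightarrow> finite (fsupp (G xs))"
  shows "lx (flin f G) F = lx f (\<lambda>xs. lx (G xs) F)"
proof -
  have "lx (flin f G) F = (\<Sum>xs\<in>fsupp f. lx (\<lambda>z. f xs * G xs z) F)"
    unfolding flin_def using assms by (intro lx_sumf fin_smul) auto
  also have "\<dots> = (\<Sum>xs\<in>fsupp f. smul (f xs) (lx (G xs) F))"
    using assms by (intro sum.cong lx_smul) auto
  finally show ?thesis by (simp add: lx_def)
qed

lemma lx_flin2: assumes "finite (fsupp f)" "finite (fsupp g)"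
  shows "lx (flin f (\<lambda>xs. flin g (\<lambda>ys. bv (P xs ys)))) F = lx f (\<lambda>xs. lx g (\<lambda>ys. F (P xs ys)))"
proof -
  have "lx (flin f (\<lambda>xs. flin g (\<lambda>ys. bv (P xs ys)))) F = lx f (\<lambda>xs. lx (flin g (\<lambda>ys. bv (P xs ys))) F)"
    using assms by (intro lx_flin fin_flin) auto
  also have "\<dots> = lx f (\<lambda>xs. lx g (\<lambda>ys. lx (bv (P xs ys)) F))"
    using assms by (intro lx_cong lx_flin) auto
  finally show ?thesis by simp
qed

lemma lx_fmul: "finite (fsupp f) \<Longrightarrow> finite (fsupp g) \<Longrightarrow>
   lx (fmul f g) F = lx f (\<lambda>xs. lx g (\<lambda>ys. F (map2 (*) xs ys)))"
  unfolding fmul_flin by (rule lx_flin2)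

lemma lx_fcat: "finite (fsupp f) \<Longrightarrow> finite (fsupp g) \<Longrightarrow>
   lx (fcat f g) F = lx f (\<lambda>xs. lx g (\<lambda>ys. F (xs @ ys)))"
  unfolding fcat_flin by (rule lx_flin2)

definition MLn :: "nat \<Rightarrow> ('a list \<Rightarrow> 'v) \<Rightarrow> bool" where
  "MLn n F \<longleftrightarrow>
    (\<forall>zs i a b. length zs = n \<longrightarrow> i < n \<longrightarrow> F (zs[i := a + b]) - F (zs[i := a]) - F (zs[i := b]) \<in> R) \<and>
    (\<forall>zs i c a. length zs = n \<longrightarrow> i < n \<longrightarrow> F (zs[i := sc c a]) - smul c (F (zs[i := a])) \<in> R)"

lemma fin_relgens: "g \<in> relgens n \<Longrightarrow> finite (fsupp g)"
  unfolding relgens_def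
  by (auto intro!: fin_diff fin_smul simp del: append.simps)

lemma lx_bv3: "lx (\<lambda>zs. bv A zs - bv B zs - bv C zs) F = F A - F B - F C"
proof -
  have "finite (fsupp (\<lambda>zs. bv A zs - (bv B zs :: 'k)))" by (intro fin_diff) simp_all
  then show ?thesis using lx_diff[of "\<lambda>zs. bv A zs - bv B zs" "bv C" F] lx_diff[of "bv A" "bv B" F] by simp
qed

lemma lx_bv2: "lx (\<lambda>zs. bv A zs - c * bv B zs) F = F A - smul c (F B)"
proof -
  have "finite (fsupp (\<lambda>zs. c * (bv B zs :: 'k)))" by (intro fin_smul) simp_all
  then show ?thesis using lx_diff[of "bv A" "\<lambda>zs. c * bv B zs" F] lx_smul[of "bv B" c F] by simp
qed

lemma lx_relgen: assumes g: "g \<in> relgens n" and M: "MLn n F" shows "lx g F \<in> R"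
  using g unfolding relgens_def
proof (elim UnE CollectE exE conjE)
  fix xs a b ys assume e: "g = (\<lambda>zs. bv (xs @ [a + b] @ ys) zs - bv (xs @ [a] @ ys) zs - bv (xs @ [b] @ ys) zs)"
    and l: "length xs + length ys + 1 = n"
  have "lx g F = F (xs @ [a + b] @ ys) - F (xs @ [a] @ ys) - F (xs @ [b] @ ys)"
    unfolding e by (rule lx_bv3)
  also have "\<dots> \<in> R"
    using M l unfolding MLn_def
    by (auto elim!: allE[of _ "xs @ [a] @ ys"] allE[of _ "length xs"] simp: list_update_append)
  finally show ?thesis .
next
  fix xs c a ys assume e: "g = (\<lambda>zs. bv (xs @ [sc c a] @ ys) zs - c * bv (xs @ [a] @ ys) zs)"
    and l: "length xs + length ys + 1 = n"
  have "lx g F = F (xs @ [sc c a] @ ys) - smul c (F (xs @ [a] @ ys))"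
    unfolding e by (rule lx_bv2)
  also have "\<dots> \<in> R"
    using M l unfolding MLn_def
    by (auto elim!: allE[of _ "xs @ [a] @ ys"] allE[of _ "length xs"] simp: list_update_append)
  finally show ?thesis .
qed

lemma lx_rel: assumes f: "f \<in> rel n" and M: "MLn n F" shows "lx f F \<in> R"
proof -
  obtain t r where t: "finite t" "t \<subseteq> relgens n" "f = (\<lambda>zs. \<Sum>g\<in>t. r g * g zs)"
    using f unfolding rel_def by blast
  have "lx f F = (\<Sum>g\<in>t. lx (\<lambda>z. r g * g z) F)"
    unfolding t(3) using t fin_relgens by (intro lx_sumf fin_smul) auto
  also have "\<dots> = (\<Sum>g\<in>t. smul (r g) (lx g F))"
    using t fin_relgens by (intro sum.cong lx_smul) auto
  also have "\<dots> \<in> R"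
    using t lx_relgen M by (intro Rsum Rsm) auto
  finally show ?thesis .
qed

lemma lx_eqv: assumes "eqv n f g" "finite (fsupp f)" "finite (fsupp g)" "MLn n F"
  shows "lx f F - lx g F \<in> R"
  using lx_rel[of "\<lambda>z. f z - g z" n F] assms lx_diff by (simp add: eqv_def)

lemma Mlin_intro: "(\<And>zs i. length zs = n \<Longrightarrow> i < n \<Longrightarrow> klin sc smul (\<lambda>x. F (zs[i := x]))) \<Longrightarrow> MLn n F"
  unfolding MLn_def klin_def by (auto simp: R0)

lemma Mlin_lx: assumes "\<And>ys. ys \<in> fsupp g \<Longrightarrow> MLn n (\<lambda>xs. H xs ys)"
  shows "MLn n (\<lambda>xs. lx g (H xs))"
  unfolding MLn_def
proof (intro conjI allI impI)
  fix zs :: "'a list" and i a b assume l: "length zs = n" "i < n"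
  have "lx g (H (zs[i := a + b])) - lx g (H (zs[i := a])) - lx g (H (zs[i := b]))
      = lx g (\<lambda>ys. H (zs[i := a + b]) ys - H (zs[i := a]) ys - H (zs[i := b]) ys)"
    by (simp add: lx_Fdiff)
  also have "\<dots> \<in> R" using assms l by (intro lx_R) (auto simp: MLn_def)
  finally show "lx g (H (zs[i := a + b])) - lx g (H (zs[i := a])) - lx g (H (zs[i := b])) \<in> R" .
next
  fix zs :: "'a list" and i c a assume l: "length zs = n" "i < n"
  have "lx g (H (zs[i := sc c a])) - smul c (lx g (H (zs[i := a])))
      = lx g (\<lambda>ys. H (zs[i := sc c a]) ys - smul c (H (zs[i := a]) ys))"
    by (simp add: lx_Fdiff lx_Fsm)
  also have "\<dots> \<in> R" using assms l by (intro lx_R) (auto simp: MLn_def)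
  finally show "lx g (H (zs[i := sc c a])) - smul c (lx g (H (zs[i := a]))) \<in> R" .
qed

end

lemma len2: "length zs = 2 \<Longrightarrow> zs = [zs!0, zs!1]"
  by (cases zs; cases "tl zs"; auto)
lemma len3: "length zs = 3 \<Longrightarrow> zs = [zs!0, zs!1, zs!2]"
  by (cases zs; cases "tl zs"; cases "tl (tl zs)"; auto)
lemma less2: "i < (2::nat) \<longleftrightarrow> i = 0 \<or> i = 1" by auto
lemma less3: "i < (3::nat) \<longleftrightarrow> i = 0 \<or> i = 1 \<or> i = 2" by auto

lemma map2_assoc: "map2 (*) (map2 (*) xs ys) vs = map2 (*) xs (map2 (*) ys (vs::'a::semigroup_mult list))"
proof (induction xs arbitrary: ys vs)
  case Nil then show ?case by simp
next
  case (Cons x xs) then show ?case by (cases ys; cases vs) (auto simp: mult.assoc)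
qed

sublocale kctx \<subseteq> FV: lmr sc "\<lambda>c (g::'a list \<Rightarrow> 'k) zs. c * g zs" "rel 2"
  by unfold_locales (auto simp: fun_eq_iff algebra_simps zero_fun_def plus_fun_def rel_0
      intro: rel_add[unfolded plus_fun_def] rel_smul)

context kctx begin

lemma FV_lx: "FV.lx f F = flin f F"
  unfolding FV.lx_def flin_def by (simp add: fun_eq_iff sum_fun_apply)

lemma FV_R_eqv: "A - B \<in> rel 2 \<longleftrightarrow> eqv 2 A B"
  by (simp add: eqv_def fun_diff_def)

lemma flin_eqv: assumes "eqv n f g" "finite (fsupp f)" "finite (fsupp g)" "FV.MLn n F"
  shows "eqv 2 (flin f F) (flin g F)"
  using FV.lx_eqv[OF assms] by (simp add: FV_lx FV_R_eqv)

lemma flin_cong_eqv: fixes f :: "'a list \<Rightarrow> 'k" shows "(\<And>xs. xs \<in> fsupp f \<Longrightarrow> eqv 2 (A xs) (B xs)) \<Longrightarrow> eqv 2 (flin f A) (flin f B)"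
proof -
  assume a: "\<And>xs. xs \<in> fsupp f \<Longrightarrow> eqv 2 (A xs) (B xs)"
  have "FV.lx f (\<lambda>xs. A xs - B xs) \<in> rel 2"
    by (rule FV.lx_R) (use a in \<open>simp add: FV_R_eqv\<close>)
  then show ?thesis by (simp add: FV.lx_Fdiff FV_lx FV_R_eqv)
qed

lemma FV_Mlbv:
  assumes len: "\<And>zs. length zs = n \<Longrightarrow> length (P zs) = 2"
    and upd: "\<And>zs i. length zs = n \<Longrightarrow> i < n \<Longrightarrow> \<exists>j \<phi>. j < 2 \<and> (\<forall>x y. \<phi> (x + y) = \<phi> x + \<phi> y) \<and>
        (\<forall>c x. \<phi> (sc c x) = sc c (\<phi> x)) \<and> (\<forall>x. P (zs[i := x]) = (P zs)[j := \<phi> x])"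
  shows "FV.MLn n (\<lambda>xs. bv (P xs))"
  unfolding FV.MLn_def
proof (intro conjI allI impI)
  fix zs :: "'a list" and i a b assume l: "length zs = n" "i < n"
  obtain j \<phi> where j: "j < 2" "\<forall>x y. \<phi> (x + y) = \<phi> x + \<phi> y" "\<forall>x. P (zs[i := x]) = (P zs)[j := \<phi> x]"
    using upd[OF l] by blast
  have "(\<lambda>z. bv ((P zs)[j := \<phi> a + \<phi> b]) z - bv ((P zs)[j := \<phi> a]) z - bv ((P zs)[j := \<phi> b]) z) \<in> rel 2"
    using gen_add[of j "P zs"] j len[OF l(1)] by simp
  then show "bv (P (zs[i := a + b])) - bv (P (zs[i := a])) - bv (P (zs[i := b])) \<in> rel 2"
    using j by (simp add: fun_diff_def)
next
  fix zs :: "'a list" and i c a assume l: "length zs = n" "i < n"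
  obtain j \<phi> where j: "j < 2" "\<forall>c x. \<phi> (sc c x) = sc c (\<phi> x)" "\<forall>x. P (zs[i := x]) = (P zs)[j := \<phi> x]"
    using upd[OF l] by blast
  have "(\<lambda>z. bv ((P zs)[j := sc c (\<phi> a)]) z - c * bv ((P zs)[j := \<phi> a]) z) \<in> rel 2"
    using gen_sc[of j "P zs"] j len[OF l(1)] by simp
  then show "bv (P (zs[i := sc c a])) - (\<lambda>zsa. c * bv (P (zs[i := a])) zsa) \<in> rel 2"
    using j by (simp add: fun_diff_def)
qed

end

locale hb = kctx sc for sc :: "'k::comm_ring_1 \<Rightarrow> 'a::ring_1 \<Rightarrow> 'a" +
  fixes \<Delta> :: "'a \<Rightarrow> ('a list \<Rightarrow> 'k) set" and \<epsilon> :: "'a \<Rightarrow> 'k"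
  assumes bialg: "bialgebra \<Delta> \<epsilon>"
begin

lemma ka: "kalgebra" using bialg by (simp add: bialgebra_def)

lemma sc_add_r: "sc c (x + y) = sc c x + sc c y" using ka by (simp add: kalgebra_def)
lemma sc_add_l: "sc (c + d) x = sc c x + sc d x" using ka by (simp add: kalgebra_def)
lemma sc_mult: "sc (c * d) x = sc c (sc d x)" using ka by (simp add: kalgebra_def)
lemma sc_one[simp]: "sc 1 x = x" using ka by (simp add: kalgebra_def)
lemma sc_mult_l: "sc c (x * y) = sc c x * y" using ka unfolding kalgebra_def by blast
lemma sc_mult_r: "sc c (x * y) = x * sc c y" using ka unfolding kalgebra_def by blast
lemma sc_zero_r0: "sc c 0 = 0" using sc_add_r[of c 0 0] by simp

end

sublocale hb \<subseteq> AV: lmr sc sc "{0}"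
  by unfold_locales (auto simp: sc_add_r sc_add_l sc_mult sc_zero_r0)

context hb begin

lemma sc_zero_r[simp]: "sc c 0 = 0" by (rule AV.sm_zero_r)
lemma sc_zero_l[simp]: "sc 0 x = 0" by (rule AV.sm_zero_l)
lemma sc_neg_r: "sc c (- x) = - sc c x" by (rule AV.sm_neg_r)
lemma sc_comm1: "sc c x = x * sc c 1" using sc_mult_r[of c x 1] by simp
lemma sc_comm2: "sc c x = sc c 1 * x" using sc_mult_l[of c 1 x] by simp

lemma alin_AV: "alin f F = AV.lx f F" by (simp add: alin_def AV.lx_def)

lemma map2_upd1: "length zs = 2 \<Longrightarrow> length ys = 2 \<Longrightarrow> i < 2 \<Longrightarrow>
   map2 (*) (zs[i := x]) ys = (map2 (*) zs ys)[i := x * ys ! i]"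
  unfolding numeral_2_eq_2 by (auto simp: length_Suc_conv less_Suc_eq)
lemma map2_upd2: "length zs = 2 \<Longrightarrow> length xs = 2 \<Longrightarrow> i < 2 \<Longrightarrow>
   map2 (*) xs (zs[i := x]) = (map2 (*) xs zs)[i := xs ! i * x]"
  unfolding numeral_2_eq_2 by (auto simp: length_Suc_conv less_Suc_eq)

lemma Mlin_map2_1: "length ys = 2 \<Longrightarrow> FV.MLn 2 (\<lambda>xs. bv (map2 (*) xs ys))"
  by (rule FV_Mlbv) (auto simp: map2_upd1 distrib_right sc_mult_l intro!: exI[of _ "\<lambda>x. x * ys ! _"])

end

type_synonym ('a, 'k) fr = "'a list \<Rightarrow> 'k"

context hb begin

lemma Mlin_map2_2: "length xs = 2 \<Longrightarrow> FV.MLn 2 (\<lambda>ys. bv (map2 (*) xs ys))"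
  by (rule FV_Mlbv) (auto simp: map2_upd2 distrib_left sc_mult_r intro!: exI[of _ "\<lambda>x. xs ! _ * x"])

lemma flin_cong: "(\<And>xs. xs \<in> fsupp f \<Longrightarrow> F xs = G xs) \<Longrightarrow> flin f F = flin f G"
  unfolding flin_def by (simp add: fun_eq_iff)

lemma flin_bv1[simp]: "flin (bv l) F = F l"
  by (simp add: flin_def bv_apply fun_eq_iff)

lemma free_fmul[simp]: fixes f g :: "('a, 'k) fr" assumes "f \<in> free 2" "g \<in> free 2" shows "fmul f g \<in> free 2"
proof -
  have l: "length (map2 (*) xs ys) = 2" if "xs \<in> fsupp f" "ys \<in> fsupp g" for xs ys
  proof -
    have "length xs = 2" "length ys = 2" using that assms freeD(2) by blast+
    then show ?thesis by simp
  qed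
  show ?thesis
  unfolding fmul_flin using assms l by (intro free_flin) (auto dest: freeD)
qed

lemma Mlin_fmul1: fixes g :: "('a, 'k) fr" assumes "g \<in> free 2" shows "FV.MLn 2 (\<lambda>xs. flin g (\<lambda>ys. bv (map2 (*) xs ys)))"
proof -
  have "FV.MLn 2 (\<lambda>xs. FV.lx g (\<lambda>ys. bv (map2 (*) xs ys)))"
    by (rule FV.Mlin_lx) (use Mlin_map2_1 freeD assms in blast)
  then show ?thesis by (simp add: FV_lx)
qed

lemma fmul_eqv_l: fixes f f' g :: "('a, 'k) fr" assumes "f \<in> free 2" "f' \<in> free 2" "g \<in> free 2" "eqv 2 f f'"
  shows "eqv 2 (fmul f g) (fmul f' g)"
  unfolding fmul_flin using assms Mlin_fmul1[OF assms(3)] by (intro flin_eqv) (auto dest: freeD)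

lemma fmul_eqv_r: fixes f g g' :: "('a, 'k) fr" assumes "f \<in> free 2" "g \<in> free 2" "g' \<in> free 2" "eqv 2 g g'"
  shows "eqv 2 (fmul f g) (fmul f g')"
  unfolding fmul_flin using assms Mlin_map2_2 freeD(2)[OF assms(1)] by (intro flin_cong_eqv flin_eqv) (auto dest: freeD)

lemma tmul_cls: fixes f g :: "('a, 'k) fr" assumes "f \<in> free 2" "g \<in> free 2"
  shows "tmul 2 (cls 2 f) (cls 2 g) = cls 2 (fmul f g)"
proof -
  have "eqv 2 (fmul (rep (cls 2 f)) (rep (cls 2 g))) (fmul f (rep (cls 2 g)))"
    using assms rep_cls by (intro fmul_eqv_l) auto
  also have "eqv 2 \<dots> (fmul f g)"
    using assms rep_cls by (intro fmul_eqv_r) auto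
  finally show ?thesis unfolding tmul_def using assms rep_cls by (intro cls_eqI) auto
qed

lemma fmul_assoc: fixes f g h :: "('a, 'k) fr" assumes "finite (fsupp f)" "finite (fsupp g)" "finite (fsupp h)"
  shows "fmul (fmul f g) h = fmul f (fmul g h)"
proof -
  have "fmul (fmul f g) h = FV.lx (fmul f g) (\<lambda>ws. flin h (\<lambda>vs. bv (map2 (*) ws vs)))"
    by (simp add: fmul_flin[of "fmul f g"] FV_lx)
  also have "\<dots> = FV.lx f (\<lambda>xs. FV.lx g (\<lambda>ys. flin h (\<lambda>vs. bv (map2 (*) (map2 (*) xs ys) vs))))"
    using FV.lx_fmul[OF assms(1,2), of "\<lambda>ws. flin h (\<lambda>vs. bv (map2 (*) ws vs))"] by simp
  also have "\<dots> = flin f (\<lambda>xs. flin g (\<lambda>ys. flin h (\<lambda>vs. bv (map2 (*) (map2 (*) xs ys) vs))))"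
    by (simp add: FV_lx)
  also have "\<dots> = flin f (\<lambda>xs. flin g (\<lambda>ys. flin h (\<lambda>vs. bv (map2 (*) xs (map2 (*) ys vs)))))"
    by (simp add: map2_assoc)
  also have "\<dots> = flin f (\<lambda>xs. FV.lx (fmul g h) (\<lambda>ws. bv (map2 (*) xs ws)))"
    using FV.lx_fmul[OF assms(2,3)] by (simp add: FV_lx)
  also have "\<dots> = fmul f (fmul g h)"
    by (simp add: fmul_flin[of f "fmul g h"] FV_lx)
  finally show ?thesis .
qed

lemma fmul_one_l: fixes g :: "('a, 'k) fr" assumes "g \<in> free 2" shows "fmul (bv [1, 1]) g = g"
proof -
  have "fmul (bv [1, 1]) g = flin g (\<lambda>ys. bv (map2 (*) [1, 1] ys))" by (simp add: fmul_flin)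
  also have "\<dots> = flin g bv"
    using assms by (intro flin_cong) (auto dest!: freeD(2) simp: numeral_2_eq_2 length_Suc_conv)
  finally show ?thesis using flin_bv assms freeD by auto
qed

lemma fmul_one_r: fixes g :: "('a, 'k) fr" assumes "g \<in> free 2" shows "fmul g (bv [1, 1]) = g"
proof -
  have "fmul g (bv [1, 1]) = flin g (\<lambda>xs. bv (map2 (*) xs [1, 1]))" by (simp add: fmul_flin)
  also have "\<dots> = flin g bv"
    using assms by (intro flin_cong) (auto dest!: freeD(2) simp: numeral_2_eq_2 length_Suc_conv)
  finally show ?thesis using flin_bv assms freeD by auto
qed

lemma fmul_add_l: fixes f f' g :: "('a, 'k) fr" assumes "finite (fsupp f)" "finite (fsupp f')"
  shows "fmul (\<lambda>z. f z + f' z) g = (\<lambda>z. fmul f g z + fmul f' g z)"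
  unfolding fmul_flin using FV.lx_add[OF assms] by (simp add: FV_lx plus_fun_def)

lemma fmul_smul_l: fixes f g :: "('a, 'k) fr" assumes "finite (fsupp f)"
  shows "fmul (\<lambda>z. c * f z) g = (\<lambda>z. c * fmul f g z)"
  unfolding fmul_flin using FV.lx_smul[OF assms] by (simp add: FV_lx)

lemma fmul_add_r: fixes f g g' :: "('a, 'k) fr" assumes "finite (fsupp g)" "finite (fsupp g')"
  shows "fmul f (\<lambda>z. g z + g' z) = (\<lambda>z. fmul f g z + fmul f g' z)"
proof -
  have "fmul f (\<lambda>z. g z + g' z) = FV.lx f (\<lambda>xs. FV.lx g (\<lambda>ys. bv (map2 (*) xs ys)) + FV.lx g' (\<lambda>ys. bv (map2 (*) xs ys)))"
    unfolding fmul_flin FV_lx[symmetric] using FV.lx_add[OF assms] by simp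
  also have "\<dots> = (\<lambda>z. fmul f g z + fmul f g' z)"
    unfolding FV.lx_Fadd by (simp add: fmul_flin FV_lx plus_fun_def)
  finally show ?thesis .
qed

lemma fmul_smul_r: fixes f g :: "('a, 'k) fr" assumes "finite (fsupp g)"
  shows "fmul f (\<lambda>z. c * g z) = (\<lambda>z. c * fmul f g z)"
proof -
  have "fmul f (\<lambda>z. c * g z) = FV.lx f (\<lambda>xs. (\<lambda>zs. c * FV.lx g (\<lambda>ys. bv (map2 (*) xs ys)) zs))"
    unfolding fmul_flin FV_lx[symmetric] using FV.lx_smul[OF assms] by simp
  also have "\<dots> = (\<lambda>z. c * fmul f g z)"
    unfolding FV.lx_Fsm by (simp add: fmul_flin FV_lx)
  finally show ?thesis .
qed

lemma tone_cls: "tone 2 = cls 2 (bv [1, 1])"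
  by (simp add: tone_def tens_def numeral_2_eq_2)

lemmas free_simps[simp] = free_add free_neg free_smul free_diff
lemmas fin_simps = fin_add fin_neg fin_smul fin_diff

lemma T_tadd[simp]: assumes "X \<in> T n" "Y \<in> T n" shows "tadd n X Y \<in> T n"
proof -
  obtain f g where "f \<in> free n" "X = cls n f" "g \<in> free n" "Y = cls n g"
    using assms by (metis T_cases)
  then show ?thesis by (simp add: tadd_cls T_cls)
qed

lemma T_tneg[simp]: assumes "X \<in> T n" shows "tneg n X \<in> T n"
proof -
  obtain f where "f \<in> free n" "X = cls n f"
    using assms by (metis T_cases)
  then show ?thesis by (simp add: tneg_cls T_cls)
qed

lemma T_tsc[simp]: assumes "X \<in> T n" shows "tsc n c X \<in> T n"
proof -
  obtain f where "f \<in> free n" "X = cls n f"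
    using assms by (metis T_cases)
  then show ?thesis by (simp add: tsc_cls T_cls)
qed

lemma T_tzero[simp]: "tzero n \<in> T n"
  by (simp add: tzero_cls T_cls)

lemma T_tmul[simp]: assumes "X \<in> T 2" "Y \<in> T 2" shows "tmul 2 X Y \<in> T 2"
proof -
  obtain f g where "f \<in> free 2" "X = cls 2 f" "g \<in> free 2" "Y = cls 2 g"
    using assms by (metis T_cases)
  then show ?thesis by (simp add: tmul_cls T_cls)
qed

lemma T_tone[simp]: "tone 2 \<in> T 2"
  by (simp add: tone_cls T_cls)
lemma T_tens2[simp]: "tens [a, b] \<in> T 2"
  using tens_T[of "[a, b]"] by (simp add: numeral_2_eq_2)
lemma tens2_cls: "tens [a, b] = cls 2 (bv [a, b])"
  by (simp add: tens_def numeral_2_eq_2)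

lemma tadd_assoc: assumes "X \<in> T n" "Y \<in> T n" "Z \<in> T n" shows "tadd n (tadd n X Y) Z = tadd n X (tadd n Y Z)"
proof -
  obtain f g h where "f \<in> free n" "X = cls n f" "g \<in> free n" "Y = cls n g" "h \<in> free n" "Z = cls n h"
    using assms by (metis T_cases)
  then show ?thesis by (simp add: tadd_cls add.assoc)
qed

lemma tadd_comm: assumes "X \<in> T n" "Y \<in> T n" shows "tadd n X Y = tadd n Y X"
proof -
  obtain f g where "f \<in> free n" "X = cls n f" "g \<in> free n" "Y = cls n g"
    using assms by (metis T_cases)
  then show ?thesis by (simp add: tadd_cls add.commute)
qed

lemma tadd_zero_l: assumes "X \<in> T n" shows "tadd n (tzero n) X = X"
proof -
  obtain f where "f \<in> free n" "X = cls n f"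
    using assms by (metis T_cases)
  then show ?thesis by (simp add: tadd_cls tzero_cls)
qed

lemma tadd_zero_r: assumes "X \<in> T n" shows "tadd n X (tzero n) = X"
proof -
  obtain f where "f \<in> free n" "X = cls n f"
    using assms by (metis T_cases)
  then show ?thesis by (simp add: tadd_cls tzero_cls)
qed

lemma tadd_neg: assumes "X \<in> T n" shows "tadd n X (tneg n X) = tzero n"
proof -
  obtain f where "f \<in> free n" "X = cls n f"
    using assms by (metis T_cases)
  then show ?thesis by (simp add: tadd_cls tneg_cls tzero_cls)
qed

lemma tneg_tadd: assumes "X \<in> T n" "Y \<in> T n" shows "tneg n (tadd n X Y) = tadd n (tneg n X) (tneg n Y)"
proof -
  obtain f g where "f \<in> free n" "X = cls n f" "g \<in> free n" "Y = cls n g"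
    using assms by (metis T_cases)
  then show ?thesis by (simp add: tadd_cls tneg_cls)
qed

lemma tneg_tneg: assumes "X \<in> T n" shows "tneg n (tneg n X) = X"
proof -
  obtain f where "f \<in> free n" "X = cls n f"
    using assms by (metis T_cases)
  then show ?thesis by (simp add: tneg_cls)
qed

lemma tneg_zero: "tneg n (tzero n) = tzero n"
  by (simp add: tneg_cls tzero_cls)

lemma tsc_tadd: assumes "X \<in> T n" "Y \<in> T n" shows "tsc n c (tadd n X Y) = tadd n (tsc n c X) (tsc n c Y)"
proof -
  obtain f g where "f \<in> free n" "X = cls n f" "g \<in> free n" "Y = cls n g"
    using assms by (metis T_cases)
  then show ?thesis by (simp add: tadd_cls tsc_cls algebra_simps)
qed

lemma tsc_tsc: assumes "X \<in> T n" shows "tsc n c (tsc n d X) = tsc n (c * d) X"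
proof -
  obtain f where "f \<in> free n" "X = cls n f"
    using assms by (metis T_cases)
  then show ?thesis by (simp add: tsc_cls algebra_simps)
qed

lemma tsc_neg: assumes "X \<in> T n" shows "tsc n c (tneg n X) = tneg n (tsc n c X)"
proof -
  obtain f where "f \<in> free n" "X = cls n f"
    using assms by (metis T_cases)
  then show ?thesis by (simp add: tneg_cls tsc_cls algebra_simps)
qed

lemma tmul_assoc: assumes "X \<in> T 2" "Y \<in> T 2" "Z \<in> T 2" shows "tmul 2 (tmul 2 X Y) Z = tmul 2 X (tmul 2 Y Z)"
proof -
  obtain f g h where "f \<in> free 2" "X = cls 2 f" "g \<in> free 2" "Y = cls 2 g" "h \<in> free 2" "Z = cls 2 h"
    using assms by (metis T_cases)
  then show ?thesis by (simp add: tmul_cls fmul_assoc freeD(1))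
qed

lemma tmul_one_l: assumes "X \<in> T 2" shows "tmul 2 (tone 2) X = X"
proof -
  obtain f where "f \<in> free 2" "X = cls 2 f"
    using assms by (metis T_cases)
  then show ?thesis by (simp add: tmul_cls tone_cls fmul_one_l)
qed

lemma tmul_one_r: assumes "X \<in> T 2" shows "tmul 2 X (tone 2) = X"
proof -
  obtain f where "f \<in> free 2" "X = cls 2 f"
    using assms by (metis T_cases)
  then show ?thesis by (simp add: tmul_cls tone_cls fmul_one_r)
qed

lemma tmul_add_l: assumes "X \<in> T 2" "Y \<in> T 2" "Z \<in> T 2"
  shows "tmul 2 (tadd 2 X Y) Z = tadd 2 (tmul 2 X Z) (tmul 2 Y Z)"
proof -
  obtain f g h where fr: "f \<in> free 2" "g \<in> free 2" "h \<in> free 2" and e: "X = cls 2 f" "Y = cls 2 g" "Z = cls 2 h"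
    using assms by (metis T_cases)
  have "tmul 2 (tadd 2 X Y) Z = cls 2 (fmul (\<lambda>z. f z + g z) h)"
    unfolding e using fr by (simp only: tadd_cls tmul_cls free_add)
  also have "\<dots> = cls 2 (\<lambda>z. fmul f h z + fmul g h z)"
    using fr by (simp only: fmul_add_l freeD(1))
  also have "\<dots> = tadd 2 (tmul 2 X Z) (tmul 2 Y Z)"
    unfolding e using fr by (simp only: tadd_cls tmul_cls free_fmul)
  finally show ?thesis .
qed

lemma tmul_add_r: assumes "X \<in> T 2" "Y \<in> T 2" "Z \<in> T 2"
  shows "tmul 2 X (tadd 2 Y Z) = tadd 2 (tmul 2 X Y) (tmul 2 X Z)"
proof -
  obtain f g h where fr: "f \<in> free 2" "g \<in> free 2" "h \<in> free 2" and e: "X = cls 2 f" "Y = cls 2 g" "Z = cls 2 h"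
    using assms by (metis T_cases)
  have "tmul 2 X (tadd 2 Y Z) = cls 2 (fmul f (\<lambda>z. g z + h z))"
    unfolding e using fr by (simp only: tadd_cls tmul_cls free_add)
  also have "\<dots> = cls 2 (\<lambda>z. fmul f g z + fmul f h z)"
    using fr by (simp only: fmul_add_r freeD(1))
  also have "\<dots> = tadd 2 (tmul 2 X Y) (tmul 2 X Z)"
    unfolding e using fr by (simp only: tadd_cls tmul_cls free_fmul)
  finally show ?thesis .
qed

lemma tmul_sc_l: assumes "X \<in> T 2" "Y \<in> T 2"
  shows "tmul 2 (tsc 2 c X) Y = tsc 2 c (tmul 2 X Y)"
proof -
  obtain f g where fr: "f \<in> free 2" "g \<in> free 2" and e: "X = cls 2 f" "Y = cls 2 g"
    using assms by (metis T_cases)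
  have "tmul 2 (tsc 2 c X) Y = cls 2 (fmul (\<lambda>z. c * f z) g)"
    unfolding e using fr by (simp only: tsc_cls tmul_cls free_smul)
  also have "\<dots> = cls 2 (\<lambda>z. c * fmul f g z)"
    using fr by (simp only: fmul_smul_l freeD(1))
  also have "\<dots> = tsc 2 c (tmul 2 X Y)"
    unfolding e using fr by (simp only: tsc_cls tmul_cls free_fmul)
  finally show ?thesis .
qed

lemma tmul_sc_r: assumes "X \<in> T 2" "Y \<in> T 2"
  shows "tmul 2 X (tsc 2 c Y) = tsc 2 c (tmul 2 X Y)"
proof -
  obtain f g where fr: "f \<in> free 2" "g \<in> free 2" and e: "X = cls 2 f" "Y = cls 2 g"
    using assms by (metis T_cases)
  have "tmul 2 X (tsc 2 c Y) = cls 2 (fmul f (\<lambda>z. c * g z))"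
    unfolding e using fr by (simp only: tsc_cls tmul_cls free_smul)
  also have "\<dots> = cls 2 (\<lambda>z. c * fmul f g z)"
    using fr by (simp only: fmul_smul_r freeD(1))
  also have "\<dots> = tsc 2 c (tmul 2 X Y)"
    unfolding e using fr by (simp only: tsc_cls tmul_cls free_fmul)
  finally show ?thesis .
qed

lemma tmul_sc1_l: "X \<in> T 2 \<Longrightarrow> tmul 2 (tsc 2 c (tone 2)) X = tsc 2 c X"
  by (simp add: tmul_sc_l tmul_one_l)
lemma tmul_sc1_r: "X \<in> T 2 \<Longrightarrow> tmul 2 X (tsc 2 c (tone 2)) = tsc 2 c X"
  by (simp add: tmul_sc_r tmul_one_r)
lemma tneg_tsc: assumes "X \<in> T n" shows "tneg n X = tsc n (-1) X"
proof -
  obtain f where "f \<in> free n" "X = cls n f" using assms by (metis T_cases)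
  then show ?thesis by (simp add: tneg_cls tsc_cls)
qed

lemma tmul_neg_r: assumes "X \<in> T 2" "Y \<in> T 2" shows "tmul 2 X (tneg 2 Y) = tneg 2 (tmul 2 X Y)"
  using assms by (simp add: tneg_tsc[of Y] tneg_tsc[of "tmul 2 X Y"] tmul_sc_r)

lemma tmul_zero_r: "X \<in> T 2 \<Longrightarrow> tmul 2 X (tzero 2) = tzero 2"
proof -
  assume a: "X \<in> T 2"
  have "tzero 2 = tsc 2 0 (tone 2)" by (simp add: tone_cls tsc_cls tzero_cls)
  moreover have "tsc 2 0 X = tzero 2" using a by (auto elim!: T_cases simp: tsc_cls tzero_cls)
  ultimately show ?thesis using a by (simp add: tmul_sc1_r)
qed

end

context hb begin

lemma Delta_T[simp]: "\<Delta> a \<in> T 2" using bialg by (simp add: bialgebra_def)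

definition genW :: "'a \<Rightarrow> ('a list \<Rightarrow> 'k) set" where
  "genW a = tadd 2 (tsc 2 (\<epsilon> a) (tone 2)) (tneg 2 (\<Delta> a))"

lemma genW_T[simp]: "genW a \<in> T 2" by (simp add: genW_def)

definition IC :: "('a list \<Rightarrow> 'k) set set \<Rightarrow> bool" where
  "IC I \<longleftrightarrow> I \<subseteq> T 2 \<and> {genW a | a. True} \<subseteq> I \<and> tzero 2 \<in> I \<and>
       (\<forall>x\<in>I. \<forall>y\<in>I. tadd 2 x y \<in> I) \<and> (\<forall>x\<in>I. tneg 2 x \<in> I) \<and>
       (\<forall>b\<in>T 2. \<forall>x\<in>I. tmul 2 b x \<in> I)"

lemma W_eq: "Wid \<Delta> \<epsilon> = \<Inter>{I. IC I}"
  unfolding Wid_def lideal_def IC_def genW_def by simp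

lemma IC_T: "IC (T 2)" unfolding IC_def by auto

lemma W_least: "IC I \<Longrightarrow> Wid \<Delta> \<epsilon> \<subseteq> I" unfolding W_eq by blast

lemma W_T: "x \<in> Wid \<Delta> \<epsilon> \<Longrightarrow> x \<in> T 2" using W_least[OF IC_T] by blast
lemma W_gen: "genW a \<in> Wid \<Delta> \<epsilon>" unfolding W_eq IC_def by blast
lemma W_zero: "tzero 2 \<in> Wid \<Delta> \<epsilon>" unfolding W_eq IC_def by blast
lemma W_add: "x \<in> Wid \<Delta> \<epsilon> \<Longrightarrow> y \<in> Wid \<Delta> \<epsilon> \<Longrightarrow> tadd 2 x y \<in> Wid \<Delta> \<epsilon>"
  unfolding W_eq IC_def by blast
lemma W_neg: "x \<in> Wid \<Delta> \<epsilon> \<Longrightarrow> tneg 2 x \<in> Wid \<Delta> \<epsilon>"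
  unfolding W_eq IC_def by blast
lemma W_mul: "b \<in> T 2 \<Longrightarrow> x \<in> Wid \<Delta> \<epsilon> \<Longrightarrow> tmul 2 b x \<in> Wid \<Delta> \<epsilon>"
  unfolding W_eq IC_def by blast
lemma W_sc: "x \<in> Wid \<Delta> \<epsilon> \<Longrightarrow> tsc 2 c x \<in> Wid \<Delta> \<epsilon>"
  using W_mul[of "tsc 2 c (tone 2)" x] W_T tmul_sc1_l by simp

definition dW :: "('a list \<Rightarrow> 'k) set \<Rightarrow> ('a list \<Rightarrow> 'k) set \<Rightarrow> ('a list \<Rightarrow> 'k) set" where
  "dW x y = tadd 2 x (tneg 2 y)"

lemma dW_T[simp]: "x \<in> T 2 \<Longrightarrow> y \<in> T 2 \<Longrightarrow> dW x y \<in> T 2" by (simp add: dW_def)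

lemma dW_self: "x \<in> T 2 \<Longrightarrow> dW x x = tzero 2"
  by (simp add: dW_def tadd_neg)

lemma dW_sym: assumes "x \<in> T 2" "y \<in> T 2" shows "dW y x = tneg 2 (dW x y)"
proof -
  obtain f g where "f \<in> free 2" "g \<in> free 2" "x = cls 2 f" "y = cls 2 g" using assms by (metis T_cases)
  then show ?thesis by (simp add: dW_def tadd_cls tneg_cls)
qed

lemma dW_trans: assumes "x \<in> T 2" "y \<in> T 2" "z \<in> T 2" shows "dW x z = tadd 2 (dW x y) (dW y z)"
proof -
  obtain f g h where "f \<in> free 2" "g \<in> free 2" "h \<in> free 2" "x = cls 2 f" "y = cls 2 g" "z = cls 2 h"
    using assms by (metis T_cases)
  then show ?thesis by (simp add: dW_def tadd_cls tneg_cls)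
qed

lemma dW_add: assumes "x \<in> T 2" "y \<in> T 2" "x' \<in> T 2" "y' \<in> T 2"
  shows "dW (tadd 2 x y) (tadd 2 x' y') = tadd 2 (dW x x') (dW y y')"
proof -
  obtain f g f' g' where "f \<in> free 2" "g \<in> free 2" "f' \<in> free 2" "g' \<in> free 2"
     "x = cls 2 f" "y = cls 2 g" "x' = cls 2 f'" "y' = cls 2 g'"
    using assms by (metis T_cases)
  then show ?thesis by (simp add: dW_def tadd_cls tneg_cls algebra_simps)
qed

lemma dW_mul: assumes "b \<in> T 2" "x \<in> T 2" "y \<in> T 2"
  shows "dW (tmul 2 b x) (tmul 2 b y) = tmul 2 b (dW x y)"
  using assms by (simp add: dW_def tmul_add_r tmul_neg_r)

lemma dW_mul_l: assumes "b \<in> T 2" "b' \<in> T 2" "x \<in> T 2"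
  shows "dW (tmul 2 b x) (tmul 2 b' x) = tmul 2 (dW b b') x"
proof -
  have "tmul 2 (tneg 2 b') x = tneg 2 (tmul 2 b' x)"
    using assms by (simp add: tneg_tsc tmul_sc_l)
  then show ?thesis using assms by (simp add: dW_def tmul_add_l)
qed

lemma qcls_self: "x \<in> T 2 \<Longrightarrow> x \<in> qcls (Wid \<Delta> \<epsilon>) x"
  by (simp add: qcls_def dW_self[unfolded dW_def] W_zero)

lemma qcls_eq: assumes "x \<in> T 2" "y \<in> T 2"
  shows "qcls (Wid \<Delta> \<epsilon>) x = qcls (Wid \<Delta> \<epsilon>) y \<longleftrightarrow> dW x y \<in> Wid \<Delta> \<epsilon>"
proof
  assume "qcls (Wid \<Delta> \<epsilon>) x = qcls (Wid \<Delta> \<epsilon>) y"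
  then have "x \<in> qcls (Wid \<Delta> \<epsilon>) y" using qcls_self[OF assms(1)] by simp
  then show "dW x y \<in> Wid \<Delta> \<epsilon>" by (simp add: qcls_def dW_def)
next
  assume d: "dW x y \<in> Wid \<Delta> \<epsilon>"
  show "qcls (Wid \<Delta> \<epsilon>) x = qcls (Wid \<Delta> \<epsilon>) y"
  proof (auto simp: qcls_def dW_def[symmetric])
    fix z assume "z \<in> T 2" "dW z x \<in> Wid \<Delta> \<epsilon>"
    then show "dW z y \<in> Wid \<Delta> \<epsilon>" using d assms dW_trans[of z x y] W_add by simp
  next
    fix z assume "z \<in> T 2" "dW z y \<in> Wid \<Delta> \<epsilon>"
    then show "dW z x \<in> Wid \<Delta> \<epsilon>" using d assms dW_trans[of z y x] dW_sym[of x y] W_add W_neg by simp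
  qed
qed

lemma qcls_eqI: "x \<in> T 2 \<Longrightarrow> y \<in> T 2 \<Longrightarrow> dW x y \<in> Wid \<Delta> \<epsilon> \<Longrightarrow> qcls (Wid \<Delta> \<epsilon>) x = qcls (Wid \<Delta> \<epsilon>) y"
  using qcls_eq by blast

lemma rep_qcls: assumes "x \<in> T 2"
  shows "rep (qcls (Wid \<Delta> \<epsilon>) x) \<in> T 2" "dW (rep (qcls (Wid \<Delta> \<epsilon>) x)) x \<in> Wid \<Delta> \<epsilon>"
proof -
  have "rep (qcls (Wid \<Delta> \<epsilon>) x) \<in> qcls (Wid \<Delta> \<epsilon>) x"
    unfolding rep_def using qcls_self[OF assms] by (rule someI[where P="\<lambda>y. y \<in> qcls (Wid \<Delta> \<epsilon>) x"])
  then show "rep (qcls (Wid \<Delta> \<epsilon>) x) \<in> T 2" "dW (rep (qcls (Wid \<Delta> \<epsilon>) x)) x \<in> Wid \<Delta> \<epsilon>"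
    by (auto simp: qcls_def dW_def)
qed

lemma qcls_rep: "x \<in> T 2 \<Longrightarrow> qcls (Wid \<Delta> \<epsilon>) (rep (qcls (Wid \<Delta> \<epsilon>) x)) = qcls (Wid \<Delta> \<epsilon>) x"
  using rep_qcls qcls_eqI by blast

lemma Q_ball: "(\<forall>q\<in>Q (Wid \<Delta> \<epsilon>). P q) \<longleftrightarrow> (\<forall>x\<in>T 2. P (qcls (Wid \<Delta> \<epsilon>) x))"
  by (simp add: Q_def)
lemma Q_bex: "(\<exists>q\<in>Q (Wid \<Delta> \<epsilon>). P q) \<longleftrightarrow> (\<exists>x\<in>T 2. P (qcls (Wid \<Delta> \<epsilon>) x))"
  by (simp add: Q_def)
lemma qcls_Q[simp]: "x \<in> T 2 \<Longrightarrow> qcls (Wid \<Delta> \<epsilon>) x \<in> Q (Wid \<Delta> \<epsilon>)"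
  by (simp add: Q_def)

lemma qadd_qcls: assumes "x \<in> T 2" "y \<in> T 2"
  shows "qadd (Wid \<Delta> \<epsilon>) (qcls (Wid \<Delta> \<epsilon>) x) (qcls (Wid \<Delta> \<epsilon>) y) = qcls (Wid \<Delta> \<epsilon>) (tadd 2 x y)"
  unfolding qadd_def using assms rep_qcls[OF assms(1)] rep_qcls[OF assms(2)]
  by (intro qcls_eqI) (simp_all add: dW_add W_add)

lemma qact_qcls: assumes "b \<in> T 2" "x \<in> T 2"
  shows "qact (Wid \<Delta> \<epsilon>) b (qcls (Wid \<Delta> \<epsilon>) x) = qcls (Wid \<Delta> \<epsilon>) (tmul 2 b x)"
  unfolding qact_def using assms rep_qcls[OF assms(2)]
  by (intro qcls_eqI) (simp_all add: dW_mul W_mul)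

lemma lmod_Q: "lmod (Q (Wid \<Delta> \<epsilon>)) (qadd (Wid \<Delta> \<epsilon>)) (qact (Wid \<Delta> \<epsilon>))"
  unfolding lmod_def Q_ball Q_bex
  apply (simp add: qadd_qcls qact_qcls tadd_assoc tmul_add_r tmul_add_l tmul_assoc tmul_one_l)
  apply (intro conjI ballI)
  subgoal for x y by (simp add: tadd_comm)
  subgoal
    apply (rule bexI[of _ "tzero 2"])
     apply (intro conjI ballI)
      apply (simp add: tadd_zero_l)
    subgoal for x by (rule bexI[of _ "tneg 2 x"]) (simp_all add: tadd_neg)
    apply simp
    done
  done


lemma tmul_genW: assumes "b \<in> T 2"
  shows "tmul 2 b (genW a) = tadd 2 (tsc 2 (\<epsilon> a) b) (tneg 2 (tmul 2 b (\<Delta> a)))"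
  using assms by (simp add: genW_def tmul_add_r tmul_sc1_r tmul_neg_r)

lemma qcls_Delta: assumes "x \<in> T 2"
  shows "qcls (Wid \<Delta> \<epsilon>) (tmul 2 x (\<Delta> a)) = qcls (Wid \<Delta> \<epsilon>) (tsc 2 (\<epsilon> a) x)"
proof (rule qcls_eqI)
  have "dW (\<Delta> a) (tsc 2 (\<epsilon> a) (tone 2)) = tneg 2 (genW a)"
    using dW_sym[of "tsc 2 (\<epsilon> a) (tone 2)" "\<Delta> a"] by (simp add: genW_def dW_def)
  then have "dW (tmul 2 x (\<Delta> a)) (tsc 2 (\<epsilon> a) x) = tmul 2 x (tneg 2 (genW a))"
    using assms dW_mul[of x "\<Delta> a" "tsc 2 (\<epsilon> a) (tone 2)"] by (simp add: tmul_sc1_r)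
  then show "dW (tmul 2 x (\<Delta> a)) (tsc 2 (\<epsilon> a) x) \<in> Wid \<Delta> \<epsilon>"
    using assms by (simp add: W_mul W_neg W_gen)
qed (use assms in auto)

definition Phi :: "(('a list \<Rightarrow> 'k) set set \<Rightarrow> 'k) \<Rightarrow> ('a list \<Rightarrow> 'k) set \<Rightarrow> 'k" where
  "Phi \<phi> = (\<lambda>u. if u \<in> T 2 then \<phi> (qcls (Wid \<Delta> \<epsilon>) u) else 0)"

lemma Zp_D: assumes "g \<in> Zp \<Delta> \<epsilon>"
  shows "\<And>x y. x \<in> T 2 \<Longrightarrow> y \<in> T 2 \<Longrightarrow> g (tadd 2 x y) = g x + g y"
    "\<And>c x. x \<in> T 2 \<Longrightarrow> g (tsc 2 c x) = c * g x"
    "\<And>x a. x \<in> T 2 \<Longrightarrow> g (tmul 2 x (\<Delta> a)) = g x * \<epsilon> a"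
    "\<And>x. x \<notin> T 2 \<Longrightarrow> g x = 0"
  using assms by (auto simp: Zp_def)

lemma Zp_zero: assumes "g \<in> Zp \<Delta> \<epsilon>" shows "g (tzero 2) = 0"
  using Zp_D(1)[OF assms, of "tzero 2" "tzero 2"] by (simp add: tadd_zero_l)

lemma Zp_neg: assumes "g \<in> Zp \<Delta> \<epsilon>" "x \<in> T 2" shows "g (tneg 2 x) = - g x"
  using Zp_D(1)[OF assms(1), of x "tneg 2 x"] assms Zp_zero[OF assms(1)]
  by (simp add: tadd_neg add.commute eq_neg_iff_add_eq_0)

lemma Zp_W: assumes g: "g \<in> Zp \<Delta> \<epsilon>" and x: "x \<in> Wid \<Delta> \<epsilon>" shows "g x = 0"
proof -
  let ?I = "{x \<in> T 2. \<forall>b\<in>T 2. g (tmul 2 b x) = 0}"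
  have "IC ?I"
    unfolding IC_def
  proof (intro conjI ballI subsetI)
    fix y assume "y \<in> {genW a | a. True}"
    then obtain a where y: "y = genW a" by blast
    show "y \<in> ?I"
      using Zp_D[OF g] Zp_neg[OF g] by (simp add: y tmul_genW mult.commute)
  next
    show "tzero 2 \<in> ?I" using Zp_zero[OF g] by (simp add: tmul_zero_r)
  next
    fix x y assume "x \<in> ?I" "y \<in> ?I" then show "tadd 2 x y \<in> ?I"
      using Zp_D[OF g] by (simp add: tmul_add_r)
  next
    fix x assume "x \<in> ?I" then show "tneg 2 x \<in> ?I"
      using Zp_neg[OF g] by (simp add: tmul_neg_r)
  next
    fix b x assume "b \<in> T 2" "x \<in> ?I" then show "tmul 2 b x \<in> ?I"
      by (simp add: tmul_assoc[symmetric])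
  qed auto
  then have "x \<in> ?I" using W_least x by blast
  then have "x \<in> T 2" "g (tmul 2 (tone 2) x) = 0" by auto
  then show ?thesis using tmul_one_l[of x] by simp
qed

lemma Zp_qcls: assumes g: "g \<in> Zp \<Delta> \<epsilon>" and x: "x \<in> T 2"
  shows "g (rep (qcls (Wid \<Delta> \<epsilon>) x)) = g x"
proof -
  have "g (dW (rep (qcls (Wid \<Delta> \<epsilon>) x)) x) = 0" using Zp_W[OF g] rep_qcls[OF x] by blast
  then show ?thesis using Zp_D(1)[OF g] Zp_neg[OF g] rep_qcls[OF x] x by (simp add: dW_def)
qed

lemma Phi_Zp: assumes "\<phi> \<in> mdual (Q (Wid \<Delta> \<epsilon>)) (qadd (Wid \<Delta> \<epsilon>)) (qact (Wid \<Delta> \<epsilon>))"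
  shows "Phi \<phi> \<in> Zp \<Delta> \<epsilon>"
proof -
  have add: "\<phi> (qcls (Wid \<Delta> \<epsilon>) (tadd 2 x y)) = \<phi> (qcls (Wid \<Delta> \<epsilon>) x) + \<phi> (qcls (Wid \<Delta> \<epsilon>) y)"
    if "x \<in> T 2" "y \<in> T 2" for x y
    using assms that by (simp add: mdual_def Q_ball qadd_qcls)
  have sc: "\<phi> (qcls (Wid \<Delta> \<epsilon>) (tsc 2 c x)) = c * \<phi> (qcls (Wid \<Delta> \<epsilon>) x)" if "x \<in> T 2" for c x
    using assms that by (simp add: mdual_def Q_ball qact_qcls tmul_sc1_l)
  show ?thesis
    unfolding Zp_def Phi_def using add sc by (auto simp: qcls_Delta mult.commute)
qed

lemma Phi_inj: "inj_on Phi (mdual (Q (Wid \<Delta> \<epsilon>)) (qadd (Wid \<Delta> \<epsilon>)) (qact (Wid \<Delta> \<epsilon>)))"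
proof (rule inj_onI)
  fix \<phi> \<psi> assume p: "\<phi> \<in> mdual (Q (Wid \<Delta> \<epsilon>)) (qadd (Wid \<Delta> \<epsilon>)) (qact (Wid \<Delta> \<epsilon>))"
    and q: "\<psi> \<in> mdual (Q (Wid \<Delta> \<epsilon>)) (qadd (Wid \<Delta> \<epsilon>)) (qact (Wid \<Delta> \<epsilon>))"
    and e: "Phi \<phi> = Phi \<psi>"
  show "\<phi> = \<psi>"
  proof
    fix r show "\<phi> r = \<psi> r"
    proof (cases "r \<in> Q (Wid \<Delta> \<epsilon>)")
      case True
      then obtain u where u: "u \<in> T 2" "r = qcls (Wid \<Delta> \<epsilon>) u" by (auto simp: Q_def)
      then show ?thesis using fun_cong[OF e, of u] by (simp add: Phi_def)
    next
      case False then show ?thesis using p q by (simp add: mdual_def)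
    qed
  qed
qed

lemma Phi_surj: assumes g: "g \<in> Zp \<Delta> \<epsilon>"
  shows "g \<in> Phi ` mdual (Q (Wid \<Delta> \<epsilon>)) (qadd (Wid \<Delta> \<epsilon>)) (qact (Wid \<Delta> \<epsilon>))"
proof
  define \<phi> where "\<phi> r = (if r \<in> Q (Wid \<Delta> \<epsilon>) then g (rep r) else 0)" for r
  have \<phi>q: "\<phi> (qcls (Wid \<Delta> \<epsilon>) x) = g x" if "x \<in> T 2" for x
    using that Zp_qcls[OF g] by (simp add: \<phi>_def)
  show "\<phi> \<in> mdual (Q (Wid \<Delta> \<epsilon>)) (qadd (Wid \<Delta> \<epsilon>)) (qact (Wid \<Delta> \<epsilon>))"
    unfolding mdual_def Q_ball using Zp_D[OF g]
    by (auto simp: \<phi>q qadd_qcls qact_qcls tmul_sc1_l) (simp add: \<phi>_def)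
  show "g = Phi \<phi>"
    unfolding Phi_def using Zp_D(4)[OF g] by (auto simp: \<phi>q)
qed

lemma preantipode_Q: "preantipode \<Delta> \<epsilon> (Q (Wid \<Delta> \<epsilon>)) (qadd (Wid \<Delta> \<epsilon>)) (qact (Wid \<Delta> \<epsilon>))"
  unfolding preantipode_def
proof (intro conjI exI[of _ Phi] ballI)
  show "lmod (Q (Wid \<Delta> \<epsilon>)) (qadd (Wid \<Delta> \<epsilon>)) (qact (Wid \<Delta> \<epsilon>))" by (rule lmod_Q)
  show "bij_betw Phi (mdual (Q (Wid \<Delta> \<epsilon>)) (qadd (Wid \<Delta> \<epsilon>)) (qact (Wid \<Delta> \<epsilon>))) (Zp \<Delta> \<epsilon>)"
    unfolding bij_betw_def using Phi_inj Phi_Zp Phi_surj by blast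
next
  fix \<phi> \<psi> show "Phi (\<lambda>x. \<phi> x + \<psi> x) = (\<lambda>u. Phi \<phi> u + Phi \<psi> u)"
    by (simp add: Phi_def fun_eq_iff)
next
  fix \<phi> b assume "b \<in> T 2"
  then show "Phi (dual_act (Q (Wid \<Delta> \<epsilon>)) (qact (Wid \<Delta> \<epsilon>)) \<phi> b) = Zact (Phi \<phi>) b"
    by (auto simp: Phi_def Zact_def dual_act_def fun_eq_iff qact_qcls)
qed

end

lemma flin_bv_single: "flin (bv l) F = F l"
  by (simp add: flin_def bv_apply fun_eq_iff)

lemma app2: "length zs = 2 \<Longrightarrow> zs @ [y] = [zs!0, zs!1, y]"
  by (cases zs; cases "tl zs"; auto)
lemma cons2: "length zs = 2 \<Longrightarrow> y # zs = [y, zs!0, zs!1]"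
  by (cases zs; cases "tl zs"; auto)

context lmr begin

lemma lx_swap: "lx f (\<lambda>xs. lx g (\<lambda>ys. H xs ys)) = lx g (\<lambda>ys. lx f (\<lambda>xs. H xs ys))"
  unfolding lx_def by (simp add: sm_sum_r sum.swap[of _ "fsupp f"] sm_comm)

lemma coassoc_gen:
  assumes B: "bialgebra \<Delta> \<epsilon>" and M: "MLn 3 G"
  shows "lx (rep (\<Delta> a)) (\<lambda>xs. lx (rep (\<Delta> (xs!0))) (\<lambda>zs. G [zs!0, zs!1, xs!1]))
       - lx (rep (\<Delta> a)) (\<lambda>xs. lx (rep (\<Delta> (xs!1))) (\<lambda>zs. G [xs!0, zs!0, zs!1])) \<in> R"
proof -
  have DT0: "\<And>u. \<Delta> u \<in> T 2" using B by (simp add: bialgebra_def)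
  have DT: "\<And>u. rep (\<Delta> u) \<in> free 2" using T_rep(1)[OF DT0] by blast
  have fin: "\<And>u. finite (fsupp (rep (\<Delta> u)))" using DT freeD by blast
  have len: "\<And>u zs. zs \<in> fsupp (rep (\<Delta> u)) \<Longrightarrow> length zs = 2" using DT freeD(2) by blast
  define A1 where "A1 = flin (rep (\<Delta> a)) (\<lambda>xs. fcat (rep (\<Delta> (xs!0))) (bv [xs!1]))"
  define A2 where "A2 = flin (rep (\<Delta> a)) (\<lambda>xs. fcat (bv [xs!0]) (rep (\<Delta> (xs!1))))"
  have e: "cls 3 A1 = cls 3 A2" using B unfolding A1_def A2_def by (simp add: bialgebra_def)
  have fc1: "fcat (rep (\<Delta> u)) (bv [v]) = flin (rep (\<Delta> u)) (\<lambda>zs. bv (zs @ [v]))" for u v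
    by (simp add: fcat_flin flin_bv_single)
  have fc2: "fcat (bv [v]) (rep (\<Delta> u)) = flin (rep (\<Delta> u)) (\<lambda>zs. bv (v # zs))" for u v
    by (simp add: fcat_flin flin_bv_single)
  have fr1: "fcat (rep (\<Delta> u)) (bv [v]) \<in> free 3" for u v
    unfolding fc1 using fin
  proof (intro free_flin)
    fix zs assume "zs \<in> fsupp (rep (\<Delta> u))"
    then show "bv (zs @ [v]) \<in> free 3" using len[of zs u] by simp
  qed
  have fr2: "fcat (bv [v]) (rep (\<Delta> u)) \<in> free 3" for u v
    unfolding fc2 using fin
  proof (intro free_flin)
    fix zs assume "zs \<in> fsupp (rep (\<Delta> u))"
    then show "bv (v # zs) \<in> free 3" using len[of zs u] by simp
  qed
  have f1: "A1 \<in> free 3" unfolding A1_def using fin fr1 by (intro free_flin) auto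
  have f2: "A2 \<in> free 3" unfolding A2_def using fin fr2 by (intro free_flin) auto
  have q: "eqv 3 A1 A2" using e f1 f2 cls_eq_iff by blast
  have r: "lx A1 G - lx A2 G \<in> R" using lx_eqv[OF q _ _ M] f1 f2 freeD by blast
  have l1: "lx A1 G = lx (rep (\<Delta> a)) (\<lambda>xs. lx (rep (\<Delta> (xs!0))) (\<lambda>zs. G [zs!0, zs!1, xs!1]))"
  proof -
    have "lx A1 G = lx (rep (\<Delta> a)) (\<lambda>xs. lx (fcat (rep (\<Delta> (xs!0))) (bv [xs!1])) G)"
      unfolding A1_def using fin freeD(1)[OF fr1] by (intro lx_flin) auto
    also have "\<dots> = lx (rep (\<Delta> a)) (\<lambda>xs. lx (rep (\<Delta> (xs!0))) (\<lambda>zs. G (zs @ [xs!1])))"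
    proof (rule lx_cong)
      fix xs
      have "lx (fcat (rep (\<Delta> (xs!0))) (bv [xs!1])) G = lx (rep (\<Delta> (xs!0))) (\<lambda>zs. lx (bv [xs!1]) (\<lambda>ys. G (zs @ ys)))"
        by (rule lx_fcat[OF fin]) simp
      then show "lx (fcat (rep (\<Delta> (xs!0))) (bv [xs!1])) G = lx (rep (\<Delta> (xs!0))) (\<lambda>zs. G (zs @ [xs!1]))"
        by (simp only: lx_bv)
    qed
    also have "\<dots> = lx (rep (\<Delta> a)) (\<lambda>xs. lx (rep (\<Delta> (xs!0))) (\<lambda>zs. G [zs!0, zs!1, xs!1]))"
      by (intro lx_cong) (simp add: app2 len)
    finally show ?thesis .
  qed
  have l2: "lx A2 G = lx (rep (\<Delta> a)) (\<lambda>xs. lx (rep (\<Delta> (xs!1))) (\<lambda>zs. G [xs!0, zs!0, zs!1]))"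
  proof -
    have "lx A2 G = lx (rep (\<Delta> a)) (\<lambda>xs. lx (fcat (bv [xs!0]) (rep (\<Delta> (xs!1)))) G)"
      unfolding A2_def using fin freeD(1)[OF fr2] by (intro lx_flin) auto
    also have "\<dots> = lx (rep (\<Delta> a)) (\<lambda>xs. lx (rep (\<Delta> (xs!1))) (\<lambda>zs. G (xs!0 # zs)))"
    proof (rule lx_cong)
      fix xs
      have "lx (fcat (bv [xs!0]) (rep (\<Delta> (xs!1)))) G = lx (bv [xs!0]) (\<lambda>ys. lx (rep (\<Delta> (xs!1))) (\<lambda>zs. G (ys @ zs)))"
        by (rule lx_fcat[OF _ fin]) simp
      then show "lx (fcat (bv [xs!0]) (rep (\<Delta> (xs!1)))) G = lx (rep (\<Delta> (xs!1))) (\<lambda>zs. G (xs!0 # zs))"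
        by (simp only: lx_bv append_Cons append_Nil)
    qed
    also have "\<dots> = lx (rep (\<Delta> a)) (\<lambda>xs. lx (rep (\<Delta> (xs!1))) (\<lambda>zs. G [xs!0, zs!0, zs!1]))"
      by (intro lx_cong) (metis cons2 len)
    finally show ?thesis .
  qed
  show ?thesis using r unfolding l1 l2 .
qed

end

locale hs = hb sc \<Delta> \<epsilon> for sc :: "'k::comm_ring_1 \<Rightarrow> 'a::ring_1 \<Rightarrow> 'a" and \<Delta> \<epsilon> +
  fixes S :: "'a \<Rightarrow> 'a"
  assumes hopf: "hopf_antipode \<Delta> \<epsilon> S"
begin

abbreviation "D a \<equiv> rep (\<Delta> a)"
abbreviation "al \<equiv> AV.lx"

lemma D_free: "D a \<in> free 2" using T_rep[OF Delta_T] by blast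
lemma D_fin: "finite (fsupp (D a))" using D_free freeD by blast
lemma D_len: "zs \<in> fsupp (D a) \<Longrightarrow> length zs = 2" using D_free freeD by blast
lemma D_cls: "cls 2 (D a) = \<Delta> a" using T_rep[OF Delta_T] by blast

lemma S_add: "S (x + y) = S x + S y" using hopf by (simp add: hopf_antipode_def)
lemma S_sc: "S (sc c x) = sc c (S x)" using hopf by (simp add: hopf_antipode_def)
lemma ax3: "al (D a) (\<lambda>xs. S (xs!0) * xs!1) = sc (\<epsilon> a) 1"
  using hopf by (simp add: hopf_antipode_def alin_AV)
lemma ax4: "al (D a) (\<lambda>xs. xs!0 * S (xs!1)) = sc (\<epsilon> a) 1"
  using hopf by (simp add: hopf_antipode_def alin_AV)
lemma cu1: "al (D a) (\<lambda>xs. sc (\<epsilon> (xs!0)) (xs!1)) = a"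
  using bialg by (simp add: bialgebra_def alin_AV)
lemma cu2: "al (D a) (\<lambda>xs. sc (\<epsilon> (xs!1)) (xs!0)) = a"
  using bialg by (simp add: bialgebra_def alin_AV)

abbreviation "kl h \<equiv> klin sc sc h"

lemma kl_S: "kl S" by (simp add: klin_def S_add S_sc)
lemma kl_id: "kl (\<lambda>x. x)" by (simp add: klin_def)
lemma kl_ml: "kl (\<lambda>x. p * x)" by (simp add: klin_def distrib_left sc_mult_r)
lemma kl_mr: "kl (\<lambda>x. x * q)" by (simp add: klin_def distrib_right sc_mult_l)
lemma kl_comp: "kl h \<Longrightarrow> kl k \<Longrightarrow> kl (\<lambda>x. h (k x))" by (simp add: klin_def)
lemma kl_sc: "kl (\<lambda>x. sc c x)" by (simp add: klin_def sc_add_r sc_mult[symmetric] mult.commute)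
lemma kl_add: "kl h \<Longrightarrow> kl k \<Longrightarrow> kl (\<lambda>x. h x + k x)" by (simp add: klin_def sc_add_r algebra_simps)
lemma kl_const0: "kl (\<lambda>x. 0)" by (simp add: klin_def)

lemma kl_sum: assumes "kl h" shows "h (\<Sum>i\<in>I. F i) = (\<Sum>i\<in>I. h (F i))"
proof (induction I rule: infinite_finite_induct)
  case (infinite A) then show ?case using assms AV.sm_zero_l[of 0] by (simp add: klin_def) (metis AV.sm_zero_l)
next
  case empty then show ?case using assms by (simp add: klin_def) (metis AV.sm_zero_l)
next
  case (insert x F) then show ?case using assms by (simp add: klin_def)
qed

lemma lx_kl: assumes "kl h" shows "al f (\<lambda>xs. h (F xs)) = h (al f F)"
  unfolding AV.lx_def using assms kl_sum[OF assms, of "\<lambda>xs. sc (f xs) (F xs)" "fsupp f"] by (simp add: klin_def)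

lemma ML2: assumes "\<And>y. kl (\<lambda>x. g x y)" "\<And>x. kl (\<lambda>y. g x y)"
  shows "AV.MLn 2 (\<lambda>l. g (l!0) (l!1))"
proof (rule AV.Mlin_intro)
  fix zs :: "'a list" and i :: nat assume "length zs = 2" "i < 2"
  then show "kl (\<lambda>x. g (zs[i := x] ! 0) (zs[i := x] ! 1))"
    using assms by (auto simp: less2)
qed

lemma ML3: assumes "\<And>y z. kl (\<lambda>x. g x y z)" "\<And>x z. kl (\<lambda>y. g x y z)" "\<And>x y. kl (\<lambda>z. g x y z)"
  shows "AV.MLn 3 (\<lambda>l. g (l!0) (l!1) (l!2))"
proof (rule AV.Mlin_intro)
  fix zs :: "'a list" and i :: nat assume "length zs = 3" "i < 3"
  then show "kl (\<lambda>x. g (zs[i := x] ! 0) (zs[i := x] ! 1) (zs[i := x] ! 2))"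
    using assms by (auto simp: less3)
qed

lemma coassocA: assumes "\<And>y z. kl (\<lambda>x. g x y z)" "\<And>x z. kl (\<lambda>y. g x y z)" "\<And>x y. kl (\<lambda>z. g x y z)"
  shows "al (D a) (\<lambda>xs. al (D (xs!0)) (\<lambda>zs. g (zs!0) (zs!1) (xs!1)))
       = al (D a) (\<lambda>xs. al (D (xs!1)) (\<lambda>zs. g (xs!0) (zs!0) (zs!1)))"
  using AV.coassoc_gen[OF bialg ML3[OF assms], of a] by simp


lemma eps_mult: "\<epsilon> (x * y) = \<epsilon> x * \<epsilon> y" using bialg by (simp add: bialgebra_def)
lemma Delta_mult: "\<Delta> (x * y) = tmul 2 (\<Delta> x) (\<Delta> y)" using bialg by (simp add: bialgebra_def)

lemma D_mult_eqv: "eqv 2 (D (x * y)) (fmul (D x) (D y))"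
proof -
  have "\<Delta> (x * y) = cls 2 (fmul (D x) (D y))"
    using Delta_mult tmul_cls[OF D_free D_free] D_cls by metis
  then show ?thesis using rep_cls(2)[of "fmul (D x) (D y)" 2] D_free by simp
qed

lemma AV_eqv: assumes "eqv n f g" "finite (fsupp f)" "finite (fsupp g)" "AV.MLn n G"
  shows "al f G = al g G"
  using AV.lx_eqv[OF assms] by simp

lemma multA: assumes "\<And>y. kl (\<lambda>x. g x y)" "\<And>x. kl (\<lambda>y. g x y)"
  shows "al (D (x * y)) (\<lambda>ws. g (ws!0) (ws!1)) = al (D x) (\<lambda>xs. al (D y) (\<lambda>ys. g (xs!0 * ys!0) (xs!1 * ys!1)))"
proof -
  have "al (D (x * y)) (\<lambda>ws. g (ws!0) (ws!1)) = al (fmul (D x) (D y)) (\<lambda>ws. g (ws!0) (ws!1))"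
    using D_mult_eqv D_fin freeD(1)[OF free_fmul[OF D_free D_free]] ML2[OF assms] by (rule AV_eqv)
  also have "\<dots> = al (D x) (\<lambda>xs. al (D y) (\<lambda>ys. g (map2 (*) xs ys ! 0) (map2 (*) xs ys ! 1)))"
    by (rule AV.lx_fmul[OF D_fin D_fin])
  also have "\<dots> = al (D x) (\<lambda>xs. al (D y) (\<lambda>ys. g (xs!0 * ys!0) (xs!1 * ys!1)))"
    by (intro AV.lx_cong) (simp add: D_len)
  finally show ?thesis .
qed

lemma kl_S_ml: "kl (\<lambda>u. S (p * u) * q)" by (intro kl_comp[OF kl_mr] kl_comp[OF kl_S] kl_ml)
lemma kl_S_mr: "kl (\<lambda>u. S (u * p) * q)" by (intro kl_comp[OF kl_mr] kl_comp[OF kl_S] kl_mr)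

lemma lx_mr: "al f (\<lambda>xs. F xs * q) = al f F * q"
  using lx_kl[OF kl_mr[of q], of f F] by simp
lemma lx_ml: "al f (\<lambda>xs. p * F xs) = p * al f F"
  using lx_kl[OF kl_ml[of p], of f F] by simp
lemma lx_S: "al f (\<lambda>xs. S (F xs)) = S (al f F)"
  using lx_kl[OF kl_S, of f F] by simp
lemma lx_scl: "al f (\<lambda>xs. sc c (F xs)) = sc c (al f F)"
  using lx_kl[OF kl_sc[of c], of f F] by simp

lemma sc_pull: "sc (a * b) 1 * S y = sc a (S (sc b y))"
  by (simp add: sc_mult S_sc sc_mult_l[symmetric] sc_comm2[symmetric])

lemma K3: "al (D x) (\<lambda>xs. S (xs!0 * b) * xs!1) = sc (\<epsilon> x) (S b)"
proof -
  have s1: "S (p * b) * q = al (D b) (\<lambda>ys. al (D (ys!1)) (\<lambda>zs. S (p * ys!0) * q * (zs!0 * S (zs!1))))" for p q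
  proof -
    have "S (p * b) * q = S (p * al (D b) (\<lambda>ys. sc (\<epsilon> (ys!1)) (ys!0))) * q" by (simp only: cu2)
    also have "\<dots> = al (D b) (\<lambda>ys. S (p * sc (\<epsilon> (ys!1)) (ys!0)) * q)"
      by (rule lx_kl[OF kl_S_ml, symmetric])
    also have "\<dots> = al (D b) (\<lambda>ys. S (p * ys!0) * q * sc (\<epsilon> (ys!1)) 1)"
      by (intro AV.lx_cong) (metis S_sc sc_mult_l sc_mult_r sc_comm1)
    also have "\<dots> = al (D b) (\<lambda>ys. S (p * ys!0) * q * al (D (ys!1)) (\<lambda>zs. zs!0 * S (zs!1)))"
      by (simp only: ax4)
    also have "\<dots> = al (D b) (\<lambda>ys. al (D (ys!1)) (\<lambda>zs. S (p * ys!0) * q * (zs!0 * S (zs!1))))"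
      by (intro AV.lx_cong lx_kl[OF kl_ml, symmetric])
    finally show ?thesis .
  qed
  have s2: "al (D b) (\<lambda>ys. al (D (ys!1)) (\<lambda>zs. S (p * ys!0) * q * (zs!0 * S (zs!1))))
      = al (D b) (\<lambda>ys. al (D (ys!0)) (\<lambda>zs. S (p * zs!0) * q * (zs!1 * S (ys!1))))" for p q
    by (rule coassocA[where g="\<lambda>u v w. S (p * u) * q * (v * S w)", symmetric])
       (rule kl_comp[OF kl_mr kl_S_ml], rule kl_comp[OF kl_ml kl_mr], rule kl_comp[OF kl_ml kl_comp[OF kl_ml kl_S]])
  have m: "al (D u) (\<lambda>zs. al (D x) (\<lambda>xs. S (xs!0 * zs!0) * (xs!1 * zs!1))) = sc (\<epsilon> x * \<epsilon> u) 1" for u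
  proof -
    have "al (D u) (\<lambda>zs. al (D x) (\<lambda>xs. S (xs!0 * zs!0) * (xs!1 * zs!1)))
        = al (D x) (\<lambda>xs. al (D u) (\<lambda>zs. S (xs!0 * zs!0) * (xs!1 * zs!1)))"
      by (rule AV.lx_swap)
    also have "\<dots> = al (D (x * u)) (\<lambda>ws. S (ws!0) * ws!1)"
      by (rule multA[where g="\<lambda>a b. S a * b", symmetric]) (rule kl_comp[OF kl_mr kl_S], rule kl_ml)
    also have "\<dots> = sc (\<epsilon> x * \<epsilon> u) 1" by (simp only: ax3 eps_mult)
    finally show ?thesis .
  qed
  have "al (D x) (\<lambda>xs. S (xs!0 * b) * xs!1)
      = al (D x) (\<lambda>xs. al (D b) (\<lambda>ys. al (D (ys!0)) (\<lambda>zs. S (xs!0 * zs!0) * xs!1 * (zs!1 * S (ys!1)))))"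
    by (simp only: s1 s2)
  also have "\<dots> = al (D b) (\<lambda>ys. al (D (ys!0)) (\<lambda>zs. al (D x) (\<lambda>xs. S (xs!0 * zs!0) * xs!1 * (zs!1 * S (ys!1)))))"
    by (simp add: AV.lx_swap[of "D x"])
  also have "\<dots> = al (D b) (\<lambda>ys. al (D (ys!0)) (\<lambda>zs. al (D x) (\<lambda>xs. S (xs!0 * zs!0) * (xs!1 * zs!1))) * S (ys!1))"
    by (simp only: mult.assoc[symmetric] lx_mr)
  also have "\<dots> = al (D b) (\<lambda>ys. sc (\<epsilon> x * \<epsilon> (ys!0)) 1 * S (ys!1))"
    by (simp only: m)
  also have "\<dots> = al (D b) (\<lambda>ys. sc (\<epsilon> x) (S (sc (\<epsilon> (ys!0)) (ys!1))))"
    by (simp only: sc_pull)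
  also have "\<dots> = sc (\<epsilon> x) (S b)"
    by (simp only: lx_scl lx_S cu1)
  finally show ?thesis .
qed


lemma S_mult: "S (a * b) = S b * S a"
proof -
  have "S (a * b) = S (al (D a) (\<lambda>xs. sc (\<epsilon> (xs!1)) (xs!0)) * b)" by (simp only: cu2)
  also have "\<dots> = al (D a) (\<lambda>xs. S (sc (\<epsilon> (xs!1)) (xs!0) * b))"
    by (rule lx_kl[OF kl_comp[OF kl_S kl_mr], symmetric])
  also have "\<dots> = al (D a) (\<lambda>xs. S (xs!0 * b) * sc (\<epsilon> (xs!1)) 1)"
    by (intro AV.lx_cong) (metis S_sc sc_mult_l sc_comm1)
  also have "\<dots> = al (D a) (\<lambda>xs. S (xs!0 * b) * al (D (xs!1)) (\<lambda>zs. zs!0 * S (zs!1)))"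
    by (simp only: ax4)
  also have "\<dots> = al (D a) (\<lambda>xs. al (D (xs!1)) (\<lambda>zs. S (xs!0 * b) * (zs!0 * S (zs!1))))"
    by (intro AV.lx_cong lx_kl[OF kl_ml, symmetric])
  also have "\<dots> = al (D a) (\<lambda>xs. al (D (xs!0)) (\<lambda>zs. S (zs!0 * b) * (zs!1 * S (xs!1))))"
    by (rule coassocA[where g="\<lambda>u v w. S (u * b) * (v * S w)", symmetric])
       (rule kl_comp[OF kl_mr kl_comp[OF kl_S kl_mr]], rule kl_comp[OF kl_ml kl_mr],
        rule kl_comp[OF kl_ml kl_comp[OF kl_ml kl_S]])
  also have "\<dots> = al (D a) (\<lambda>xs. al (D (xs!0)) (\<lambda>zs. S (zs!0 * b) * zs!1) * S (xs!1))"
    by (simp only: mult.assoc[symmetric] lx_mr)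
  also have "\<dots> = al (D a) (\<lambda>xs. sc (\<epsilon> (xs!0)) (S b) * S (xs!1))"
    by (simp only: K3)
  also have "\<dots> = al (D a) (\<lambda>xs. S b * S (sc (\<epsilon> (xs!0)) (xs!1)))"
    by (intro AV.lx_cong) (metis S_sc sc_mult_l sc_mult_r)
  also have "\<dots> = S b * S a"
    by (simp only: lx_ml lx_S cu1)
  finally show ?thesis .
qed

lemma Mlin_m: "AV.MLn 2 (\<lambda>xs. xs!0 * S (xs!1))"
  using ML2[where g="\<lambda>x y. x * S y"] kl_mr kl_comp[OF kl_ml kl_S] by blast

lemma S_one: "S 1 = 1"
proof -
  have "al (D 1) (\<lambda>xs. xs!0 * S (xs!1)) = 1" using ax4[of 1] bialg by (simp add: bialgebra_def)
  moreover have "D 1 = rep (cls 2 (bv [1, 1]))" using bialg by (simp add: bialgebra_def tone_cls)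
  moreover have "al (rep (cls 2 (bv [1, 1]))) (\<lambda>xs. xs!0 * S (xs!1)) = al (bv [1, 1]) (\<lambda>xs. xs!0 * S (xs!1))"
  proof (rule AV_eqv[OF rep_cls(2) _ _ Mlin_m])
    have "bv [1, 1] \<in> free 2" by (simp add: numeral_2_eq_2)
    then show "bv [1, 1] \<in> free 2" "finite (fsupp (rep (cls 2 (bv [1, 1]))))" "finite (fsupp (bv [1, 1]))"
      using freeD(1) rep_cls(1) by blast+
  qed
  ultimately show ?thesis by simp
qed

end

context hs begin

definition Lm :: "('a list \<Rightarrow> 'k) set \<Rightarrow> 'a" where
  "Lm X = al (rep X) (\<lambda>xs. xs!0 * S (xs!1))"

lemma Lm_cls: assumes "f \<in> free 2" shows "Lm (cls 2 f) = al f (\<lambda>xs. xs!0 * S (xs!1))"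
  unfolding Lm_def using assms
  by (intro AV_eqv[OF rep_cls(2) _ _ Mlin_m]) (auto intro: freeD(1) rep_cls(1))

lemma Lm_tadd: assumes "X \<in> T 2" "Y \<in> T 2" shows "Lm (tadd 2 X Y) = Lm X + Lm Y"
proof -
  obtain f g where "f \<in> free 2" "g \<in> free 2" "X = cls 2 f" "Y = cls 2 g" using assms by (metis T_cases)
  then show ?thesis by (simp add: tadd_cls Lm_cls AV.lx_add freeD(1))
qed

lemma Lm_tsc: assumes "X \<in> T 2" shows "Lm (tsc 2 c X) = sc c (Lm X)"
proof -
  obtain f where "f \<in> free 2" "X = cls 2 f" using assms by (metis T_cases)
  then show ?thesis by (simp add: tsc_cls Lm_cls AV.lx_smul freeD(1))
qed

lemma Lm_tneg: assumes "X \<in> T 2" shows "Lm (tneg 2 X) = - Lm X"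
proof -
  obtain f where "f \<in> free 2" "X = cls 2 f" using assms by (metis T_cases)
  then show ?thesis by (simp add: tneg_cls Lm_cls AV.lx_neg freeD(1))
qed

lemma Lm_tzero: "Lm (tzero 2) = 0"
  by (simp add: tzero_cls Lm_cls)

lemma bv2_free: "bv [a, b] \<in> free 2" by (simp add: numeral_2_eq_2)

lemma Lm_tens: "Lm (tens [a, b]) = a * S b"
  by (simp add: tens2_cls Lm_cls[OF bv2_free])

lemma Lm_Delta: "Lm (\<Delta> a) = sc (\<epsilon> a) 1"
  unfolding Lm_def by (rule ax4)

lemma Lm_tone: "Lm (tone 2) = 1"
  by (simp add: tone_cls Lm_cls[OF bv2_free] S_one)

lemma Mlin_c: "AV.MLn 2 (\<lambda>xs. xs!0 * c * S (xs!1))"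
  by (rule ML2[where g="\<lambda>x y. x * c * S y"]) (rule kl_comp[OF kl_mr kl_mr], rule kl_comp[OF kl_ml kl_S])

lemma Lm_tmul: assumes "B \<in> T 2" "X \<in> T 2"
  shows "Lm (tmul 2 B X) = al (rep B) (\<lambda>xs. xs!0 * Lm X * S (xs!1))"
proof -
  obtain f g where fg: "f \<in> free 2" "g \<in> free 2" "B = cls 2 f" "X = cls 2 g" using assms by (metis T_cases)
  have "Lm (tmul 2 B X) = al (fmul f g) (\<lambda>xs. xs!0 * S (xs!1))"
    using fg by (simp add: tmul_cls Lm_cls)
  also have "\<dots> = al f (\<lambda>xs. al g (\<lambda>ys. map2 (*) xs ys ! 0 * S (map2 (*) xs ys ! 1)))"
    using fg freeD(1) by (intro AV.lx_fmul) auto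
  also have "\<dots> = al f (\<lambda>xs. al g (\<lambda>ys. xs!0 * (ys!0 * S (ys!1)) * S (xs!1)))"
    using fg by (intro AV.lx_cong) (auto dest!: freeD(2) simp: S_mult mult.assoc)
  also have "\<dots> = al f (\<lambda>xs. xs!0 * al g (\<lambda>ys. ys!0 * S (ys!1)) * S (xs!1))"
    by (simp only: lx_ml lx_mr)
  also have "\<dots> = al (rep B) (\<lambda>xs. xs!0 * Lm X * S (xs!1))"
  proof -
    have "al (rep B) (\<lambda>xs. xs!0 * Lm X * S (xs!1)) = al f (\<lambda>xs. xs!0 * Lm X * S (xs!1))"
      unfolding fg(3) using fg rep_cls[of f 2] by (intro AV_eqv[OF _ _ _ Mlin_c]) (auto intro: freeD(1))
    then show ?thesis using fg by (simp add: Lm_cls)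
  qed
  finally show ?thesis .
qed

lemma Lm_W: assumes "x \<in> Wid \<Delta> \<epsilon>" shows "Lm x = 0"
proof -
  let ?I = "{x \<in> T 2. Lm x = 0}"
  have "IC ?I"
    unfolding IC_def
  proof (intro conjI ballI subsetI)
    fix y assume "y \<in> {genW a | a. True}"
    then obtain a where y: "y = genW a" by blast
    show "y \<in> ?I"
      by (simp add: y genW_def Lm_tadd Lm_tsc Lm_tneg Lm_tone Lm_Delta)
  next
    show "tzero 2 \<in> ?I" by (simp add: Lm_tzero)
  next
    fix x y assume "x \<in> ?I" "y \<in> ?I" then show "tadd 2 x y \<in> ?I" by (simp add: Lm_tadd)
  next
    fix x assume "x \<in> ?I" then show "tneg 2 x \<in> ?I" by (simp add: Lm_tneg)
  next
    fix b x assume "b \<in> T 2" "x \<in> ?I" then show "tmul 2 b x \<in> ?I" by (simp add: Lm_tmul)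
  qed auto
  then show ?thesis using W_least assms by blast
qed

definition psi :: "('a list \<Rightarrow> 'k) set set \<Rightarrow> 'a" where
  "psi q = Lm (rep q)"

lemma psi_qcls: assumes "x \<in> T 2" shows "psi (qcls (Wid \<Delta> \<epsilon>) x) = Lm x"
proof -
  have "Lm (dW (rep (qcls (Wid \<Delta> \<epsilon>) x)) x) = 0" using Lm_W rep_qcls[OF assms] by blast
  then show ?thesis using rep_qcls[OF assms] assms by (simp add: psi_def dW_def Lm_tadd Lm_tneg)
qed

end

context hs begin

lemma bvA1: "eqv 2 (bv [a + b, w]) (\<lambda>z. bv [a, w] z + bv [b, w] z)"
  using gen_add[of 0 "[a, w]" a b] by (simp add: eqv_def diff_diff_eq numeral_2_eq_2)
lemma bvA2: "eqv 2 (bv [w, a + b]) (\<lambda>z. bv [w, a] z + bv [w, b] z)"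
  using gen_add[of 1 "[w, a]" a b] by (simp add: eqv_def diff_diff_eq numeral_2_eq_2)
lemma bvS1: "eqv 2 (bv [sc c a, w]) (\<lambda>z. c * bv [a, w] z)"
  using gen_sc[of 0 "[a, w]" c a] by (simp add: eqv_def numeral_2_eq_2)
lemma bvS2: "eqv 2 (bv [w, sc c a]) (\<lambda>z. c * bv [w, a] z)"
  using gen_sc[of 1 "[w, a]" c a] by (simp add: eqv_def numeral_2_eq_2)
lemma bvZ1: "eqv 2 (bv [0, w]) (\<lambda>_. 0)"
  using bvS1[of 0 0 w] by simp
lemma bvZ2: "eqv 2 (bv [w, 0]) (\<lambda>_. 0)"
  using bvS2[of w 0 0] by simp

lemma SC1_aux: "finite B \<Longrightarrow>
  eqv 2 (\<lambda>z. \<Sum>xs\<in>B. g xs * bv [H xs, w] z) (bv [\<Sum>xs\<in>B. sc (g xs) (H xs), w])"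
proof (induction B rule: finite_induct)
  case empty then show ?case using eqv_sym[OF bvZ1] by simp
next
  case (insert x B)
  have "eqv 2 (\<lambda>z. \<Sum>xs\<in>insert x B. g xs * bv [H xs, w] z)
      (\<lambda>z. g x * bv [H x, w] z + (\<Sum>xs\<in>B. g xs * bv [H xs, w] z))"
    using insert by simp
  also have "eqv 2 \<dots> (\<lambda>z. bv [sc (g x) (H x), w] z + bv [\<Sum>xs\<in>B. sc (g xs) (H xs), w] z)"
    by (intro eqv_add eqv_sym[OF bvS1] insert.IH)
  also have "eqv 2 \<dots> (bv [sc (g x) (H x) + (\<Sum>xs\<in>B. sc (g xs) (H xs)), w])"
    by (rule eqv_sym[OF bvA1])
  finally show ?case using insert by simp
qed

lemma SC2_aux: "finite B \<Longrightarrow>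
  eqv 2 (\<lambda>z. \<Sum>xs\<in>B. g xs * bv [w, H xs] z) (bv [w, \<Sum>xs\<in>B. sc (g xs) (H xs)])"
proof (induction B rule: finite_induct)
  case empty then show ?case using eqv_sym[OF bvZ2] by simp
next
  case (insert x B)
  have "eqv 2 (\<lambda>z. \<Sum>xs\<in>insert x B. g xs * bv [w, H xs] z)
      (\<lambda>z. g x * bv [w, H x] z + (\<Sum>xs\<in>B. g xs * bv [w, H xs] z))"
    using insert by simp
  also have "eqv 2 \<dots> (\<lambda>z. bv [w, sc (g x) (H x)] z + bv [w, \<Sum>xs\<in>B. sc (g xs) (H xs)] z)"
    by (intro eqv_add eqv_sym[OF bvS2] insert.IH)
  also have "eqv 2 \<dots> (bv [w, sc (g x) (H x) + (\<Sum>xs\<in>B. sc (g xs) (H xs))])"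
    by (rule eqv_sym[OF bvA2])
  finally show ?case using insert by simp
qed

lemma SC1: "finite (fsupp g) \<Longrightarrow> eqv 2 (flin g (\<lambda>zs. bv [H zs, w])) (bv [al g H, w])"
  using SC1_aux[of "fsupp g" g H w] by (simp add: flin_def AV.lx_def)
lemma SC2: "finite (fsupp g) \<Longrightarrow> eqv 2 (flin g (\<lambda>zs. bv [w, H zs])) (bv [w, al g H])"
  using SC2_aux[of "fsupp g" g w H] by (simp add: flin_def AV.lx_def)

lemma fmul_bv1: fixes g :: "('a, 'k) fr" assumes "g \<in> free 2" shows "fmul (bv [p, 1]) g = flin g (\<lambda>ys. bv [p * ys!0, ys!1])"
  unfolding fmul_flin flin_bv_single using assms
  by (intro flin_cong) (auto dest!: freeD(2) simp: numeral_2_eq_2 length_Suc_conv)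

lemma Mlin_G3: "FV.MLn 3 (\<lambda>l. bv [S (l!0) * l!1, l!2])"
proof (rule FV_Mlbv)
  fix zs :: "'a list" and i :: nat assume l: "length zs = 3" "i < 3"
  then consider "i = 0" | "i = 1" | "i = 2" by linarith
  then show "\<exists>j \<phi>. j < 2 \<and> (\<forall>x y. \<phi> (x + y) = \<phi> x + \<phi> y) \<and> (\<forall>c x. \<phi> (sc c x) = sc c (\<phi> x)) \<and>
      (\<forall>x. [S (zs[i := x] ! 0) * zs[i := x] ! 1, zs[i := x] ! 2] = [S (zs ! 0) * zs ! 1, zs ! 2][j := \<phi> x])"
  proof cases
    case 1 then show ?thesis using l
      by (intro exI[of _ 0] exI[of _ "\<lambda>x. S x * zs!1"]) (simp add: S_add S_sc distrib_right sc_mult_l)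
  next
    case 2 then show ?thesis using l
      by (intro exI[of _ 0] exI[of _ "\<lambda>x. S (zs!0) * x"]) (simp add: distrib_left sc_mult_r)
  next
    case 3 then show ?thesis using l
      by (intro exI[of _ 1] exI[of _ "\<lambda>x. x"]) simp
  qed
qed simp

lemma F1: "eqv 2 (flin (D v) (\<lambda>xs. fmul (bv [S (xs!0), 1]) (D (xs!1)))) (bv [1, v])"
proof -
  have "flin (D v) (\<lambda>xs. fmul (bv [S (xs!0), 1]) (D (xs!1)))
      = FV.lx (D v) (\<lambda>xs. FV.lx (D (xs!1)) (\<lambda>zs. bv [S ([xs!0, zs!0, zs!1] ! 0) * [xs!0, zs!0, zs!1] ! 1, [xs!0, zs!0, zs!1] ! 2]))"
    by (simp add: FV_lx fmul_bv1[OF D_free])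
  also have "eqv 2 \<dots> (FV.lx (D v) (\<lambda>xs. FV.lx (D (xs!0)) (\<lambda>zs. bv [S ([zs!0, zs!1, xs!1] ! 0) * [zs!0, zs!1, xs!1] ! 1, [zs!0, zs!1, xs!1] ! 2])))"
    using FV.coassoc_gen[OF bialg Mlin_G3, of v] by (simp only: FV_R_eqv eqv_sym)
  also have "\<dots> = flin (D v) (\<lambda>xs. flin (D (xs!0)) (\<lambda>zs. bv [S (zs!0) * zs!1, xs!1]))"
    by (simp add: FV_lx)
  also have "eqv 2 \<dots> (flin (D v) (\<lambda>xs. bv [al (D (xs!0)) (\<lambda>zs. S (zs!0) * zs!1), xs!1]))"
    by (intro flin_cong_eqv SC1 D_fin)
  also have "\<dots> = flin (D v) (\<lambda>xs. bv [sc (\<epsilon> (xs!0)) 1, xs!1])"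
    by (simp only: ax3)
  also have "eqv 2 \<dots> (flin (D v) (\<lambda>xs. bv [1, sc (\<epsilon> (xs!0)) (xs!1)]))"
    by (intro flin_cong_eqv eqv_trans[OF bvS1 eqv_sym[OF bvS2]])
  also have "eqv 2 \<dots> (bv [1, al (D v) (\<lambda>xs. sc (\<epsilon> (xs!0)) (xs!1))])"
    by (intro SC2 D_fin)
  also have "\<dots> = bv [1, v]" by (simp only: cu1)
  finally show ?thesis .
qed


lemma W_sum: "finite B \<Longrightarrow> (\<And>xs. xs \<in> B \<Longrightarrow> C xs \<in> free 2 \<and> cls 2 (C xs) \<in> Wid \<Delta> \<epsilon>) \<Longrightarrow>
   cls 2 (\<lambda>z. \<Sum>xs\<in>B. f xs * C xs z) \<in> Wid \<Delta> \<epsilon>"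
proof (induction B rule: finite_induct)
  case empty then show ?case using W_zero by (simp add: tzero_cls)
next
  case (insert x B)
  have fr: "(\<lambda>z. \<Sum>xs\<in>B. f xs * C xs z) \<in> free 2"
    using insert by (intro free_sum free_smul) auto
  have "cls 2 (\<lambda>z. \<Sum>xs\<in>insert x B. f xs * C xs z) = cls 2 (\<lambda>z. f x * C x z + (\<Sum>xs\<in>B. f xs * C xs z))"
    using insert by simp
  also have "\<dots> = tadd 2 (tsc 2 (f x) (cls 2 (C x))) (cls 2 (\<lambda>z. \<Sum>xs\<in>B. f xs * C xs z))"
    using insert fr by (simp add: tsc_cls tadd_cls)
  also have "\<dots> \<in> Wid \<Delta> \<epsilon>"
    using insert by (intro W_add W_sc) auto
  finally show ?case .
qed

lemma W_flin: fixes f :: "('a, 'k) fr"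
  assumes fin: "finite (fsupp f)"
    and h: "\<And>xs. xs \<in> fsupp f \<Longrightarrow> A xs \<in> free 2 \<and> B xs \<in> free 2 \<and> dW (cls 2 (A xs)) (cls 2 (B xs)) \<in> Wid \<Delta> \<epsilon>"
  shows "dW (cls 2 (flin f A)) (cls 2 (flin f B)) \<in> Wid \<Delta> \<epsilon>"
proof -
  have fA: "flin f A \<in> free 2" and fB: "flin f B \<in> free 2" using fin h by (auto intro!: free_flin)
  have "dW (cls 2 (flin f A)) (cls 2 (flin f B)) = cls 2 (\<lambda>z. \<Sum>xs\<in>fsupp f. f xs * (A xs z - B xs z))"
    using fA fB by (simp add: dW_def tneg_cls tadd_cls flin_def sum_subtractf right_diff_distrib)
  also have "\<dots> \<in> Wid \<Delta> \<epsilon>"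
  proof (rule W_sum[OF fin])
    fix xs assume "xs \<in> fsupp f"
    then show "(\<lambda>z. A xs z - B xs z) \<in> free 2 \<and> cls 2 (\<lambda>z. A xs z - B xs z) \<in> Wid \<Delta> \<epsilon>"
    proof -
      have a: "A xs \<in> free 2" "B xs \<in> free 2" "dW (cls 2 (A xs)) (cls 2 (B xs)) \<in> Wid \<Delta> \<epsilon>"
        using h[OF \<open>xs \<in> fsupp f\<close>] by auto
      then show ?thesis by (simp add: dW_def tneg_cls tadd_cls)
    qed
  qed
  finally show ?thesis .
qed

lemma D_free_any: "D u \<in> free 2" by (rule D_free)

lemma Qv: "qcls (Wid \<Delta> \<epsilon>) (tens [1, v]) = qcls (Wid \<Delta> \<epsilon>) (tens [S v, 1])"
proof -
  define A where "A xs = fmul (bv [S (xs!0), 1]) (D (xs!1))" for xs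
  define B where "B xs = (\<lambda>z. \<epsilon> (xs!1) * bv [S (xs!0), 1] z)" for xs
  have fA: "A xs \<in> free 2" for xs unfolding A_def by (simp add: bv2_free D_free)
  have fB: "B xs \<in> free 2" for xs unfolding B_def by (simp add: bv2_free)
  have cA: "cls 2 (A xs) = tmul 2 (tens [S (xs!0), 1]) (\<Delta> (xs!1))" for xs
    unfolding A_def tens2_cls by (metis D_cls tmul_cls[OF bv2_free D_free])
  have cB: "cls 2 (B xs) = tsc 2 (\<epsilon> (xs!1)) (tens [S (xs!0), 1])" for xs
    unfolding B_def by (simp add: tsc_cls[OF bv2_free] tens2_cls)
  have d: "dW (cls 2 (A xs)) (cls 2 (B xs)) \<in> Wid \<Delta> \<epsilon>" for xs
    unfolding cA cB using qcls_Delta[of "tens [S (xs!0), 1]" "xs!1"] qcls_eq by simp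
  have w: "dW (cls 2 (flin (D v) A)) (cls 2 (flin (D v) B)) \<in> Wid \<Delta> \<epsilon>"
    using fA fB d by (intro W_flin D_fin) auto
  have frA: "flin (D v) A \<in> free 2" and frB: "flin (D v) B \<in> free 2"
    using fA fB D_fin by (auto intro!: free_flin)
  have e1: "cls 2 (flin (D v) A) = tens [1, v]"
    unfolding tens2_cls A_def using F1 frA[unfolded A_def] bv2_free by (intro cls_eqI)
  have "eqv 2 (flin (D v) B) (flin (D v) (\<lambda>xs. bv [sc (\<epsilon> (xs!1)) (S (xs!0)), 1]))"
    unfolding B_def by (intro flin_cong_eqv eqv_sym[OF bvS1])
  also have "eqv 2 \<dots> (bv [al (D v) (\<lambda>xs. sc (\<epsilon> (xs!1)) (S (xs!0))), 1])"
    by (intro SC1 D_fin)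
  also have "\<dots> = bv [S v, 1]"
    by (simp only: S_sc[symmetric] lx_S cu2)
  finally have e2: "cls 2 (flin (D v) B) = tens [S v, 1]"
    unfolding tens2_cls using frB bv2_free by (intro cls_eqI)
  show ?thesis using w e1 e2 qcls_eq by (metis T_tens2)
qed

lemma pure: "qcls (Wid \<Delta> \<epsilon>) (tens [a, b]) = qcls (Wid \<Delta> \<epsilon>) (tens [a * S b, 1])"
proof -
  have m: "tmul 2 (tens [x, 1]) (tens [y, z]) = tens [x * y, z]" for x y z
    by (simp add: tens2_cls tmul_cls[OF bv2_free bv2_free] fmul_flin flin_bv_single)
  have "qcls (Wid \<Delta> \<epsilon>) (tens [a, b]) = qact (Wid \<Delta> \<epsilon>) (tens [a, 1]) (qcls (Wid \<Delta> \<epsilon>) (tens [1, b]))"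
    by (simp add: qact_qcls m)
  also have "\<dots> = qact (Wid \<Delta> \<epsilon>) (tens [a, 1]) (qcls (Wid \<Delta> \<epsilon>) (tens [S b, 1]))"
    by (simp only: Qv)
  also have "\<dots> = qcls (Wid \<Delta> \<epsilon>) (tens [a * S b, 1])"
    by (simp add: qact_qcls m)
  finally show ?thesis .
qed

lemma P3: assumes x: "x \<in> T 2" shows "qcls (Wid \<Delta> \<epsilon>) x = qcls (Wid \<Delta> \<epsilon>) (tens [Lm x, 1])"
proof -
  obtain f where f: "f \<in> free 2" "x = cls 2 f" using x by (metis T_cases)
  have fin: "finite (fsupp f)" using f freeD by blast
  have len: "xs \<in> fsupp f \<Longrightarrow> xs = [xs!0, xs!1]" for xs using f freeD(2) len2 by blast
  define B where "B xs = (bv [xs!0 * S (xs!1), 1] :: ('a, 'k) fr)" for xs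
  have w: "dW (cls 2 (flin f bv)) (cls 2 (flin f B)) \<in> Wid \<Delta> \<epsilon>"
  proof (rule W_flin[OF fin])
    fix xs assume xs: "xs \<in> fsupp f"
    have "qcls (Wid \<Delta> \<epsilon>) (cls 2 (bv xs)) = qcls (Wid \<Delta> \<epsilon>) (cls 2 (B xs))"
      using pure[of "xs!0" "xs!1"] len[OF xs] unfolding B_def tens2_cls by metis
    then have "dW (cls 2 (bv xs)) (cls 2 (B xs)) \<in> Wid \<Delta> \<epsilon>"
      using qcls_eq len[OF xs] bv2_free T_cls unfolding B_def by metis
    then show "bv xs \<in> free 2 \<and> B xs \<in> free 2 \<and> dW (cls 2 (bv xs)) (cls 2 (B xs)) \<in> Wid \<Delta> \<epsilon>"
      using len[OF xs] bv2_free unfolding B_def by metis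
  qed
  have frB: "flin f B \<in> free 2" using fin unfolding B_def by (auto intro!: free_flin bv2_free)
  have e1: "cls 2 (flin f bv) = x" using f flin_bv[OF fin] by simp
  have "eqv 2 (flin f B) (bv [al f (\<lambda>xs. xs!0 * S (xs!1)), 1])"
    unfolding B_def by (rule SC1[OF fin])
  then have e2: "cls 2 (flin f B) = tens [Lm x, 1]"
    unfolding tens2_cls f(2) Lm_cls[OF f(1)] using frB bv2_free by (intro cls_eqI)
  show ?thesis using w e1 e2 qcls_eq x by (metis T_tens2)
qed



lemma psi_tens1: "psi (qcls (Wid \<Delta> \<epsilon>) (tens [a, 1])) = a"
  by (simp add: psi_qcls Lm_tens S_one)

lemma hopf_main:
  "(\<exists>\<psi>. bij_betw \<psi> (Q (Wid \<Delta> \<epsilon>)) UNIV \<and>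
      (\<forall>p\<in>Q (Wid \<Delta> \<epsilon>). \<forall>q\<in>Q (Wid \<Delta> \<epsilon>). \<psi> (qadd (Wid \<Delta> \<epsilon>) p q) = \<psi> p + \<psi> q) \<and>
      (\<forall>b\<in>T 2. \<forall>q\<in>Q (Wid \<Delta> \<epsilon>). \<psi> (qact (Wid \<Delta> \<epsilon>) b q) = smod_act S b (\<psi> q)) \<and>
      (\<forall>a b. \<psi> (qcls (Wid \<Delta> \<epsilon>) (tens [a, b])) = a * S b))
   \<and> hopfish \<Delta> \<epsilon> (Q (Wid \<Delta> \<epsilon>)) (qadd (Wid \<Delta> \<epsilon>)) (qact (Wid \<Delta> \<epsilon>))"
proof (intro conjI exI[of _ psi])
  show "bij_betw psi (Q (Wid \<Delta> \<epsilon>)) UNIV"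
    unfolding bij_betw_def
  proof
    show "inj_on psi (Q (Wid \<Delta> \<epsilon>))"
    proof (rule inj_onI)
      fix p q assume p: "p \<in> Q (Wid \<Delta> \<epsilon>)" and q: "q \<in> Q (Wid \<Delta> \<epsilon>)" and e: "psi p = psi q"
      obtain x y where xy: "x \<in> T 2" "y \<in> T 2" "p = qcls (Wid \<Delta> \<epsilon>) x" "q = qcls (Wid \<Delta> \<epsilon>) y"
        using p q by (auto simp: Q_def)
      then have "Lm x = Lm y" using e by (simp add: psi_qcls)
      then show "p = q" using xy P3 by metis
    qed
    show "psi ` Q (Wid \<Delta> \<epsilon>) = UNIV"
    proof (intro set_eqI iffI)
      fix a :: 'a
      show "a \<in> psi ` Q (Wid \<Delta> \<epsilon>)"
        by (rule image_eqI[of a psi "qcls (Wid \<Delta> \<epsilon>) (tens [a, 1])"]) (simp_all add: psi_tens1)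
    qed simp
  qed
  show "\<forall>p\<in>Q (Wid \<Delta> \<epsilon>). \<forall>q\<in>Q (Wid \<Delta> \<epsilon>). psi (qadd (Wid \<Delta> \<epsilon>) p q) = psi p + psi q"
    unfolding Q_ball by (simp add: qadd_qcls psi_qcls Lm_tadd)
  show "\<forall>b\<in>T 2. \<forall>q\<in>Q (Wid \<Delta> \<epsilon>). psi (qact (Wid \<Delta> \<epsilon>) b q) = smod_act S b (psi q)"
    unfolding Q_ball by (simp add: qact_qcls psi_qcls Lm_tmul smod_act_def alin_AV)
  show "\<forall>a b. psi (qcls (Wid \<Delta> \<epsilon>) (tens [a, b])) = a * S b"
    by (simp add: psi_qcls Lm_tens)
  show "hopfish \<Delta> \<epsilon> (Q (Wid \<Delta> \<epsilon>)) (qadd (Wid \<Delta> \<epsilon>)) (qact (Wid \<Delta> \<epsilon>))"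
    unfolding hopfish_def free_rank_one_def
  proof (rule conjI[OF preantipode_Q])
    have act: "qact (Wid \<Delta> \<epsilon>) (tens [a, 1]) (qcls (Wid \<Delta> \<epsilon>) (tone 2)) = qcls (Wid \<Delta> \<epsilon>) (tens [a, 1])" for a
      by (simp add: qact_qcls tmul_one_r)
    have inj: "inj (\<lambda>a. qcls (Wid \<Delta> \<epsilon>) (tens [a, 1]))"
    proof (rule inj_onI)
      fix a b assume "qcls (Wid \<Delta> \<epsilon>) (tens [a, 1]) = qcls (Wid \<Delta> \<epsilon>) (tens [b, 1])"
      then have "psi (qcls (Wid \<Delta> \<epsilon>) (tens [a, 1])) = psi (qcls (Wid \<Delta> \<epsilon>) (tens [b, 1]))" by simp
      then show "a = b" by (simp only: psi_tens1)
    qed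
    have rng: "range (\<lambda>a. qcls (Wid \<Delta> \<epsilon>) (tens [a, 1])) = Q (Wid \<Delta> \<epsilon>)"
    proof (intro set_eqI iffI)
      fix q assume "q \<in> range (\<lambda>a. qcls (Wid \<Delta> \<epsilon>) (tens [a, 1]))"
      then obtain a where "q = qcls (Wid \<Delta> \<epsilon>) (tens [a, 1])" by blast
      then show "q \<in> Q (Wid \<Delta> \<epsilon>)" by simp
    next
      fix q assume "q \<in> Q (Wid \<Delta> \<epsilon>)"
      then obtain x where x: "x \<in> T 2" "q = qcls (Wid \<Delta> \<epsilon>) x" by (auto simp: Q_def)
      then have "q = qcls (Wid \<Delta> \<epsilon>) (tens [Lm x, 1])" using P3[OF x(1)] by simp
      then show "q \<in> range (\<lambda>a. qcls (Wid \<Delta> \<epsilon>) (tens [a, 1]))" by (rule range_eqI)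
    qed
    show "\<exists>g\<in>Q (Wid \<Delta> \<epsilon>). bij_betw (\<lambda>a. qact (Wid \<Delta> \<epsilon>) (tens [a, 1]) g) UNIV (Q (Wid \<Delta> \<epsilon>))"
    proof (rule bexI[of _ "qcls (Wid \<Delta> \<epsilon>) (tone 2)"])
      show "bij_betw (\<lambda>a. qact (Wid \<Delta> \<epsilon>) (tens [a, 1]) (qcls (Wid \<Delta> \<epsilon>) (tone 2))) UNIV (Q (Wid \<Delta> \<epsilon>))"
        unfolding act bij_betw_def using inj rng by blast
      show "qcls (Wid \<Delta> \<epsilon>) (tone 2) \<in> Q (Wid \<Delta> \<epsilon>)" by simp
    qed
  qed
qed

end

theorem theorem4p2:
  fixes sc :: "'k::comm_ring_1 \<Rightarrow> 'a::ring_1 \<Rightarrow> 'a"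
    and \<Delta> :: "'a \<Rightarrow> ('a list \<Rightarrow> 'k) set"
    and \<epsilon> :: "'a \<Rightarrow> 'k"
  assumes bialg: "kctx.bialgebra sc \<Delta> \<epsilon>"
  shows "kctx.preantipode sc \<Delta> \<epsilon> (kctx.Q sc (kctx.Wid sc \<Delta> \<epsilon>))
           (kctx.qadd sc (kctx.Wid sc \<Delta> \<epsilon>)) (kctx.qact sc (kctx.Wid sc \<Delta> \<epsilon>)) \<and>
         (\<forall>S. kctx.hopf_antipode sc \<Delta> \<epsilon> S \<longrightarrow>
           (\<exists>\<psi>. bij_betw \<psi> (kctx.Q sc (kctx.Wid sc \<Delta> \<epsilon>)) UNIV \<and>
              (\<forall>p\<in>kctx.Q sc (kctx.Wid sc \<Delta> \<epsilon>). \<forall>q\<in>kctx.Q sc (kctx.Wid sc \<Delta> \<epsilon>).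
                  \<psi> (kctx.qadd sc (kctx.Wid sc \<Delta> \<epsilon>) p q) = \<psi> p + \<psi> q) \<and>
              (\<forall>b\<in>kctx.T sc 2. \<forall>q\<in>kctx.Q sc (kctx.Wid sc \<Delta> \<epsilon>).
                  \<psi> (kctx.qact sc (kctx.Wid sc \<Delta> \<epsilon>) b q) = kctx.smod_act sc S b (\<psi> q)) \<and>
              (\<forall>a b. \<psi> (kctx.qcls sc (kctx.Wid sc \<Delta> \<epsilon>) (kctx.tens sc [a, b])) = a * S b))
           \<and> kctx.hopfish sc \<Delta> \<epsilon> (kctx.Q sc (kctx.Wid sc \<Delta> \<epsilon>))
               (kctx.qadd sc (kctx.Wid sc \<Delta> \<epsilon>)) (kctx.qact sc (kctx.Wid sc \<Delta> \<epsilon>)))"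
proof -
  interpret hb sc \<Delta> \<epsilon> by unfold_locales (rule bialg)
  have A: "preantipode \<Delta> \<epsilon> (Q (Wid \<Delta> \<epsilon>)) (qadd (Wid \<Delta> \<epsilon>)) (qact (Wid \<Delta> \<epsilon>))"
    by (rule preantipode_Q)
  have B: "\<forall>S. hopf_antipode \<Delta> \<epsilon> S \<longrightarrow> (\<exists>\<psi>. bij_betw \<psi> (Q (Wid \<Delta> \<epsilon>)) UNIV \<and>
      (\<forall>p\<in>Q (Wid \<Delta> \<epsilon>). \<forall>q\<in>Q (Wid \<Delta> \<epsilon>). \<psi> (qadd (Wid \<Delta> \<epsilon>) p q) = \<psi> p + \<psi> q) \<and>
      (\<forall>b\<in>T 2. \<forall>q\<in>Q (Wid \<Delta> \<epsilon>). \<psi> (qact (Wid \<Delta> \<epsilon>) b q) = smod_act S b (\<psi> q)) \<and>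
      (\<forall>a b. \<psi> (qcls (Wid \<Delta> \<epsilon>) (tens [a, b])) = a * S b))
     \<and> hopfish \<Delta> \<epsilon> (Q (Wid \<Delta> \<epsilon>)) (qadd (Wid \<Delta> \<epsilon>)) (qact (Wid \<Delta> \<epsilon>))"
  proof (intro allI impI)
    fix S assume H: "hopf_antipode \<Delta> \<epsilon> S"
    interpret hs sc \<Delta> \<epsilon> S by unfold_locales (rule H)
    show "(\<exists>\<psi>. bij_betw \<psi> (Q (Wid \<Delta> \<epsilon>)) UNIV \<and>
      (\<forall>p\<in>Q (Wid \<Delta> \<epsilon>). \<forall>q\<in>Q (Wid \<Delta> \<epsilon>). \<psi> (qadd (Wid \<Delta> \<epsilon>) p q) = \<psi> p + \<psi> q) \<and>
      (\<forall>b\<in>T 2. \<forall>q\<in>Q (Wid \<Delta> \<epsilon>). \<psi> (qact (Wid \<Delta> \<epsilon>) b q) = smod_act S b (\<psi> q)) \<and>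
      (\<forall>a b. \<psi> (qcls (Wid \<Delta> \<epsilon>) (tens [a, b])) = a * S b))
     \<and> hopfish \<Delta> \<epsilon> (Q (Wid \<Delta> \<epsilon>)) (qadd (Wid \<Delta> \<epsilon>)) (qact (Wid \<Delta> \<epsilon>))"
      by (rule hopf_main)
  qed
  show ?thesis by (rule conjI[OF A B])
qed


end
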